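(* Let $n\in\mathbb{N}$. For every $m\in\mathbb{N}_0$, $\dim E_m=d_m$.
   Context: Let $L_n\subseteq(\mathbb{C}^2)^{\otimes n}$ be the symmetric tensors ($\dim L_n=n+1$) and $\rho_n$ the restriction to $L_n$ of the $n$-fold tensor power of the fundamental representation of $SU(2)$; $D_2\subseteq L_n\otimes L_n$ is the subspace of $\rho_n\otimes\rho_n$-invariant vectors. For $m\ge2$, $E_m=\big(\sum_{i=1}^{m-1}L_n^{\otimes(i-1)}\otimes D_2\otimes L_n^{\otimes(m-i-1)}\big)^\perp\subseteq L_n^{\otimes m}$, $E_1=L_n$, $E_0=\mathbb{C}$. The integers $d_m$ are defined by $d_0=1$, $d_1=n+1$, $d_m=(n+1)d_{m-1}-d_{m-2}$ for $m\ge2$. *)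

theory Defs
  imports Complex_Main "HOL-Library.Function_Algebras" "HOL-Combinatorics.Permutations"
begin

text \<open>A vector of (C^2)^{tensor N} is a function on bool lists,
  supported on the lists of length N (basis e_False, e_True of C^2).
  Concatenation of index lists realises the tensor product, so
  ((C^2)^{tensor n})^{tensor m} = (C^2)^{tensor (n*m)}.\<close>

definition cscale :: "complex \<Rightarrow> (bool list \<Rightarrow> complex) \<Rightarrow> (bool list \<Rightarrow> complex)" where
  "cscale c f = (\<lambda>xs. c * f xs)"

abbreviation cspan :: "(bool list \<Rightarrow> complex) set \<Rightarrow> (bool list \<Rightarrow> complex) set" where
  "cspan \<equiv> module.span cscale"

abbreviation cdim :: "(bool list \<Rightarrow> complex) set \<Rightarrow> nat" where
  "cdim \<equiv> vector_space.dim cscale"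

definition tens :: "nat \<Rightarrow> (bool list \<Rightarrow> complex) set" where
  "tens N = {f. \<forall>xs. length xs \<noteq> N \<longrightarrow> f xs = 0}"

definition cinner :: "nat \<Rightarrow> (bool list \<Rightarrow> complex) \<Rightarrow> (bool list \<Rightarrow> complex) \<Rightarrow> complex" where
  "cinner N f h = (\<Sum>xs\<in>{xs. length xs = N}. f xs * cnj (h xs))"

definition tprod :: "nat \<Rightarrow> (bool list \<Rightarrow> complex) set \<Rightarrow> (bool list \<Rightarrow> complex) set
    \<Rightarrow> (bool list \<Rightarrow> complex) set" where
  "tprod N A B = cspan {(\<lambda>xs. a (take N xs) * b (drop N xs)) | a b. a \<in> A \<and> b \<in> B}"

definition Lsym :: "nat \<Rightarrow> (bool list \<Rightarrow> complex) set" where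
  "Lsym n = {f \<in> tens n. \<forall>\<sigma> xs. \<sigma> permutes {..<n} \<longrightarrow> length xs = n \<longrightarrow>
       f (map (\<lambda>k. xs ! \<sigma> k) [0..<n]) = f xs}"

definition unitv :: "bool list \<Rightarrow> complex" where
  "unitv xs = (if xs = [] then 1 else 0)"

fun Lpow :: "nat \<Rightarrow> nat \<Rightarrow> (bool list \<Rightarrow> complex) set" where
  "Lpow n 0 = cspan {unitv}"
| "Lpow n (Suc m) = tprod n (Lsym n) (Lpow n m)"

definition SU2 :: "(bool \<Rightarrow> bool \<Rightarrow> complex) set" where
  "SU2 = {g. (\<forall>i j. (\<Sum>k\<in>UNIV. g i k * cnj (g j k)) = (if i = j then 1 else 0))
            \<and> g False False * g True True - g False True * g True False = 1}"

definition tact :: "(bool \<Rightarrow> bool \<Rightarrow> complex) \<Rightarrow> (bool list \<Rightarrow> complex) \<Rightarrow> (bool list \<Rightarrow> complex)" where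
  "tact g f = (\<lambda>xs. \<Sum>ys\<in>{ys. length ys = length xs}.
      (\<Prod>k<length xs. g (xs ! k) (ys ! k)) * f ys)"

definition D2 :: "nat \<Rightarrow> (bool list \<Rightarrow> complex) set" where
  "D2 n = {f \<in> tprod n (Lsym n) (Lsym n). \<forall>g\<in>SU2. tact g f = f}"

definition Espace :: "nat \<Rightarrow> nat \<Rightarrow> (bool list \<Rightarrow> complex) set" where
  "Espace n m =
    (if m = 0 then cspan {unitv}
     else if m = 1 then Lsym n
     else (let S = cspan (\<Union>i\<in>{1..m-1}.
                 tprod (n * (i - 1)) (Lpow n (i - 1)) (tprod (2 * n) (D2 n) (Lpow n (m - i - 1))))
           in {f \<in> Lpow n m. \<forall>h\<in>S. cinner (n * m) f h = 0}))"

fun dseq :: "nat \<Rightarrow> nat \<Rightarrow> int" where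
  "dseq n 0 = 1"
| "dseq n (Suc 0) = int n + 1"
| "dseq n (Suc (Suc m)) = (int n + 1) * dseq n (Suc m) - dseq n m"

end

theory Submission
  imports Defs
begin


interpretation V: vector_space cscale
  by unfold_locales (auto simp: cscale_def fun_eq_iff algebra_simps)

lemma fun_sum_apply: "(\<Sum>i\<in>I. f i) x = (\<Sum>i\<in>I. f i x)"
  by (induction I rule: infinite_finite_induct) auto

lemma cscale_apply: "cscale c f x = c * f x" by (simp add: cscale_def)

definition LN :: "nat \<Rightarrow> bool list set" where "LN N = {xs. length xs = N}"

lemma finite_LN[simp]: "finite (LN N)"
proof -
  have "LN N = {xs. set xs \<subseteq> UNIV \<and> length xs = N}" by (auto simp: LN_def)
  then show ?thesis using finite_lists_length_eq[of "UNIV::bool set" N] by simp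
qed

lemma LN_add: "LN (N + M) = (\<lambda>(u,v). u @ v) ` (LN N \<times> LN M)"
proof
  show "LN (N + M) \<subseteq> (\<lambda>(u,v). u @ v) ` (LN N \<times> LN M)"
  proof
    fix xs assume "xs \<in> LN (N + M)"
    then have "xs = (\<lambda>(u,v). u @ v) (take N xs, drop N xs)" "(take N xs, drop N xs) \<in> LN N \<times> LN M"
      by (auto simp: LN_def)
    then show "xs \<in> (\<lambda>(u,v). u @ v) ` (LN N \<times> LN M)" by blast
  qed
qed (auto simp: LN_def)

lemma sum_LN_add: "(\<Sum>xs\<in>LN (N + M). F xs) = (\<Sum>u\<in>LN N. \<Sum>v\<in>LN M. F (u @ v))"
proof -
  have inj: "inj_on (\<lambda>(u,v). u @ v) (LN N \<times> LN M)"
    by (auto simp: inj_on_def LN_def)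
  have "(\<Sum>xs\<in>LN (N + M). F xs) = (\<Sum>p\<in>LN N \<times> LN M. F ((\<lambda>(u,v). u @ v) p))"
    unfolding LN_add by (rule sum.reindex[OF inj, unfolded comp_def])
  also have "\<dots> = (\<Sum>u\<in>LN N. \<Sum>v\<in>LN M. F (u @ v))"
    by (subst sum.cartesian_product) (simp add: case_prod_beta)
  finally show ?thesis .
qed

definition lin :: "((bool list \<Rightarrow> complex) \<Rightarrow> (bool list \<Rightarrow> complex)) \<Rightarrow> bool" where
  "lin f \<longleftrightarrow> (\<forall>x y. f (x + y) = f x + f y) \<and> (\<forall>c x. f (cscale c x) = cscale c (f x))"

lemma lin_zero: "lin f \<Longrightarrow> f 0 = 0"
proof -
  assume "lin f"
  then have "f (cscale 0 0) = cscale 0 (f 0)" unfolding lin_def by blast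
  moreover have "cscale 0 (0::bool list \<Rightarrow> complex) = 0" "cscale 0 (f 0) = 0"
    by (simp_all add: cscale_def fun_eq_iff)
  ultimately show ?thesis by simp
qed

lemma span_lin:
  assumes "lin f" "x \<in> V.span S" "\<And>s. s \<in> S \<Longrightarrow> f s \<in> T" "V.subspace T"
  shows "f x \<in> T"
proof -
  have "V.subspace {x. f x \<in> T}"
    using assms(1,4) lin_zero[OF assms(1)] unfolding V.subspace_def lin_def by auto
  then show ?thesis using V.span_induct[OF assms(2), of "\<lambda>x. f x \<in> T"] assms(3) by auto
qed

definition tp :: "nat \<Rightarrow> (bool list \<Rightarrow> complex) \<Rightarrow> (bool list \<Rightarrow> complex) \<Rightarrow> (bool list \<Rightarrow> complex)" where
  "tp N a b = (\<lambda>xs. a (take N xs) * b (drop N xs))"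

lemma tp_apply: "length u = N \<Longrightarrow> tp N a b (u @ v) = a u * b v"
  by (simp add: tp_def)

lemma tprod_tp: "tprod N A B = V.span {tp N a b | a b. a \<in> A \<and> b \<in> B}"
  by (simp add: tprod_def tp_def)

lemma lin_tp_left: "lin (\<lambda>a. tp N a b)"
  by (auto simp: lin_def tp_def fun_eq_iff algebra_simps cscale_apply)

lemma lin_tp_right: "lin (\<lambda>b. tp N a b)"
  by (auto simp: lin_def tp_def fun_eq_iff algebra_simps cscale_apply)

lemma tp_assoc: "tp N a (tp M b c) = tp (N + M) (tp N a b) c"
  by (simp add: tp_def fun_eq_iff drop_take mult.assoc add.commute)

lemma tp_unit_left[simp]: "tp 0 unitv b = b"
  by (simp add: tp_def unitv_def)

lemma tp_unit_right: "a \<in> tens N \<Longrightarrow> tp N a unitv = a"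
  by (auto simp: tp_def unitv_def tens_def fun_eq_iff)

lemma tp_tens: "a \<in> tens N \<Longrightarrow> b \<in> tens M \<Longrightarrow> tp N a b \<in> tens (N + M)"
proof -
  assume a: "a \<in> tens N" and b: "b \<in> tens M"
  have "a (take N xs) * b (drop N xs) = 0" if l: "length xs \<noteq> N + M" for xs :: "bool list"
  proof (cases "length xs < N")
    case True then show ?thesis using a by (auto simp: tens_def)
  next
    case False then show ?thesis using b l by (auto simp: tens_def)
  qed
  then show ?thesis by (auto simp: tens_def tp_def)
qed

lemma subspace_tens: "V.subspace (tens N)"
  by (auto simp: V.subspace_def tens_def cscale_apply)

lemma span_tens: "S \<subseteq> tens N \<Longrightarrow> V.span S \<subseteq> tens N"
  using V.span_minimal subspace_tens by blast

lemma tprod_span: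
  "tprod N (V.span A) (V.span B) = V.span {tp N a b | a b. a \<in> A \<and> b \<in> B}"
  (is "_ = V.span ?G")
proof -
  have sub: "V.subspace (V.span ?G)" by (rule V.subspace_span)
  have gen: "tp N a b \<in> V.span ?G" if "a \<in> V.span A" "b \<in> V.span B" for a b
  proof -
    have "tp N a' b \<in> V.span ?G" if a': "a' \<in> A" for a'
      by (rule span_lin[OF lin_tp_right \<open>b \<in> V.span B\<close> _ sub]) (use a' in \<open>auto intro: V.span_base\<close>)
    then show ?thesis
      by (intro span_lin[OF lin_tp_left \<open>a \<in> V.span A\<close> _ sub]) auto
  qed
  show ?thesis
    unfolding tprod_tp
  proof
    show "V.span {tp N a b |a b. a \<in> V.span A \<and> b \<in> V.span B} \<subseteq> V.span ?G"
      using gen by (intro V.span_minimal[OF _ sub]) auto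
    show "V.span ?G \<subseteq> V.span {tp N a b |a b. a \<in> V.span A \<and> b \<in> V.span B}"
      by (intro V.span_mono) (auto intro: V.span_base)
  qed
qed

lemma cinner_add_left: "cinner N (f + g) h = cinner N f h + cinner N g h"
  by (simp add: cinner_def sum.distrib algebra_simps)
lemma cinner_scale_left: "cinner N (cscale c f) h = c * cinner N f h"
  by (simp add: cinner_def sum_distrib_left algebra_simps cscale_apply)
lemma cinner_add_right: "cinner N f (g + h) = cinner N f g + cinner N f h"
  by (simp add: cinner_def sum.distrib algebra_simps)
lemma cinner_scale_right: "cinner N f (cscale c h) = cnj c * cinner N f h"
  by (simp add: cinner_def sum_distrib_left algebra_simps cscale_apply)

lemma orth_span_right:
  assumes "\<And>g. g \<in> G \<Longrightarrow> cinner N f g = 0" "h \<in> V.span G"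
  shows "cinner N f h = 0"
proof -
  have "V.subspace {h. cinner N f h = 0}"
    by (auto simp: V.subspace_def cinner_add_right cinner_scale_right)
      (simp add: cinner_def)
  then show ?thesis using V.span_induct[OF assms(2), of "\<lambda>h. cinner N f h = 0"] assms(1) by auto
qed

lemma orth_span_left:
  assumes "\<And>g. g \<in> G \<Longrightarrow> cinner N g h = 0" "f \<in> V.span G"
  shows "cinner N f h = 0"
proof -
  have "V.subspace {f. cinner N f h = 0}"
    by (auto simp: V.subspace_def cinner_add_left cinner_scale_left)
      (simp add: cinner_def)
  then show ?thesis using V.span_induct[OF assms(2), of "\<lambda>f. cinner N f h = 0"] assms(1) by auto
qed

lemma cinner_LN: "cinner N f h = (\<Sum>xs\<in>LN N. f xs * cnj (h xs))"
  by (simp add: cinner_def LN_def)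

lemma cinner_tp:
  "cinner (N + M) (tp N a b) (tp N c d) = cinner N a c * cinner M b d"
proof -
  have "cinner (N + M) (tp N a b) (tp N c d) =
      (\<Sum>u\<in>LN N. \<Sum>v\<in>LN M. (a u * cnj (c u)) * (b v * cnj (d v)))"
    unfolding cinner_LN sum_LN_add
    by (intro sum.cong refl) (simp add: tp_apply LN_def algebra_simps)
  also have "\<dots> = cinner N a c * cinner M b d"
    by (simp add: cinner_LN sum_product)
  finally show ?thesis .
qed

lemma cinner_self_zero:
  assumes "f \<in> tens N" "cinner N f f = 0" shows "f = 0"
proof -
  have eq: "cinner N f f = of_real (\<Sum>xs\<in>LN N. (cmod (f xs))^2)"
    unfolding cinner_LN of_real_sum
    by (intro sum.cong refl) (metis complex_norm_square)
  then have "(\<Sum>xs\<in>LN N. (cmod (f xs))^2) = 0" using assms(2) by (metis of_real_eq_0_iff)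
  then have "\<forall>xs\<in>LN N. (cmod (f xs))^2 = 0"
    by (subst (asm) sum_nonneg_eq_0_iff) auto
  then show ?thesis using assms(1) by (auto simp: LN_def tens_def fun_eq_iff)
qed



definition cnt :: "bool list \<Rightarrow> nat" where "cnt xs = length (filter id xs)"

lemma cnt_simps[simp]: "cnt [] = 0" "cnt (True # xs) = Suc (cnt xs)" "cnt (False # xs) = cnt xs"
  "cnt (xs @ ys) = cnt xs + cnt ys"
  by (simp_all add: cnt_def)

lemma cnt_le: "cnt xs \<le> length xs" by (simp add: cnt_def)

lemma cnt_replicate[simp]: "cnt (replicate k True) = k" "cnt (replicate k False) = 0"
  by (induction k) auto

lemma cnt_mset: "cnt xs = count (mset xs) True"
  by (induction xs) auto

lemma cntF_mset: "count (mset xs) False = length xs - cnt xs"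
  by (induction xs) (auto simp: Suc_diff_le cnt_le)

lemma mset_eq_cnt:
  assumes "length x = length y" "cnt x = cnt y" shows "mset x = mset y"
proof (rule multiset_eqI)
  fix a :: bool
  show "count (mset x) a = count (mset y) a" using assms
    by (cases a) (simp_all add: cnt_mset[symmetric] cntF_mset)
qed

lemma permute_list_alt: "length xs = n \<Longrightarrow> map (\<lambda>k. xs ! \<sigma> k) [0..<n] = permute_list \<sigma> xs"
  by (simp add: permute_list_def)

lemma cnt_permute: "\<sigma> permutes {..<length xs} \<Longrightarrow> cnt (permute_list \<sigma> xs) = cnt xs"
  by (simp add: cnt_mset)

lemma Lsym_iff: "f \<in> Lsym n \<longleftrightarrow> f \<in> tens n \<and>
   (\<forall>x y. length x = n \<longrightarrow> length y = n \<longrightarrow> cnt x = cnt y \<longrightarrow> f x = f y)"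
proof
  assume f: "f \<in> Lsym n"
  show "f \<in> tens n \<and> (\<forall>x y. length x = n \<longrightarrow> length y = n \<longrightarrow> cnt x = cnt y \<longrightarrow> f x = f y)"
  proof (intro conjI allI impI)
    show "f \<in> tens n" using f by (simp add: Lsym_def)
    fix x y :: "bool list" assume l: "length x = n" "length y = n" and c: "cnt x = cnt y"
    have "mset x = mset y" using l c by (intro mset_eq_cnt) auto
    then obtain p where p: "p permutes {..<length y}" "permute_list p y = x"
      by (rule mset_eq_permutation)
    have "\<forall>\<sigma> xs. \<sigma> permutes {..<n} \<longrightarrow> length xs = n \<longrightarrow>
       f (map (\<lambda>k. xs ! \<sigma> k) [0..<n]) = f xs" using f unfolding Lsym_def by blast
    moreover have "p permutes {..<n}" using p l by simp
    ultimately have "f (map (\<lambda>k. y ! p k) [0..<n]) = f y" using l by blast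
    then show "f x = f y" using p l by (simp add: permute_list_alt)
  qed
next
  assume r: "f \<in> tens n \<and> (\<forall>x y. length x = n \<longrightarrow> length y = n \<longrightarrow> cnt x = cnt y \<longrightarrow> f x = f y)"
  show "f \<in> Lsym n"
    unfolding Lsym_def
  proof (intro CollectI conjI allI impI)
    show "f \<in> tens n" using r by simp
    fix \<sigma> and xs :: "bool list" assume s: "\<sigma> permutes {..<n}" and l: "length xs = n"
    have "map (\<lambda>k. xs ! \<sigma> k) [0..<n] = permute_list \<sigma> xs" using l by (simp add: permute_list_alt)
    moreover have "cnt (permute_list \<sigma> xs) = cnt xs" using s l by (simp add: cnt_permute)
    moreover have "length (permute_list \<sigma> xs) = n" using l by simp
    ultimately show "f (map (\<lambda>k. xs ! \<sigma> k) [0..<n]) = f xs" using r l by metis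
  qed
qed

definition sv :: "nat \<Rightarrow> nat \<Rightarrow> bool list \<Rightarrow> complex" where
  "sv n a = (\<lambda>xs. if length xs = n \<and> cnt xs = a then 1 else 0)"

definition repc :: "nat \<Rightarrow> nat \<Rightarrow> bool list" where
  "repc n a = replicate a True @ replicate (n - a) False"

lemma repc_len[simp]: "a \<le> n \<Longrightarrow> length (repc n a) = n" by (simp add: repc_def)
lemma repc_cnt[simp]: "cnt (repc n a) = a" by (simp add: repc_def)

lemma sv_tens: "sv n a \<in> tens n" unfolding tens_def sv_def by auto

lemma Lsym_I: "f \<in> tens n \<Longrightarrow> (\<And>x y. length x = n \<Longrightarrow> length y = n \<Longrightarrow> cnt x = cnt y \<Longrightarrow> f x = f y)
  \<Longrightarrow> f \<in> Lsym n"
  unfolding Lsym_iff by blast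

lemma Lsym_D: "f \<in> Lsym n \<Longrightarrow> f \<in> tens n"
  "f \<in> Lsym n \<Longrightarrow> length x = n \<Longrightarrow> length y = n \<Longrightarrow> cnt x = cnt y \<Longrightarrow> f x = f y"
  unfolding Lsym_iff by blast+

lemma sv_Lsym: "sv n a \<in> Lsym n"
  by (rule Lsym_I[OF sv_tens]) (simp add: sv_def)

lemma subspace_Lsym: "V.subspace (Lsym n)"
  unfolding V.subspace_def
proof (intro conjI ballI allI)
  show "0 \<in> Lsym n" by (rule Lsym_I) (simp_all add: tens_def)
  fix x y assume x: "x \<in> Lsym n" and y: "y \<in> Lsym n"
  show "x + y \<in> Lsym n"
  proof (rule Lsym_I)
    show "x + y \<in> tens n" using Lsym_D(1)[OF x] Lsym_D(1)[OF y] by (simp add: tens_def)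
    fix a b :: "bool list" assume "length a = n" "length b = n" "cnt a = cnt b"
    then show "(x + y) a = (x + y) b" using Lsym_D(2)[OF x, of a b] Lsym_D(2)[OF y, of a b] by simp
  qed
next
  fix c x assume x: "x \<in> Lsym n"
  show "cscale c x \<in> Lsym n"
  proof (rule Lsym_I)
    show "cscale c x \<in> tens n" using Lsym_D(1)[OF x] by (simp add: tens_def cscale_apply)
    fix a b :: "bool list" assume "length a = n" "length b = n" "cnt a = cnt b"
    then show "cscale c x a = cscale c x b" using Lsym_D(2)[OF x, of a b] by (simp add: cscale_apply)
  qed
qed

lemma Lsym_span: "Lsym n = V.span (sv n ` {..n})"
proof
  show "V.span (sv n ` {..n}) \<subseteq> Lsym n"
    using sv_Lsym subspace_Lsym by (intro V.span_minimal) auto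
  show "Lsym n \<subseteq> V.span (sv n ` {..n})"
  proof
    fix f assume f: "f \<in> Lsym n"
    have fsym: "\<And>x y. length x = n \<Longrightarrow> length y = n \<Longrightarrow> cnt x = cnt y \<Longrightarrow> f x = f y"
      and ftens: "f \<in> tens n" using f unfolding Lsym_iff by blast+
    have eq: "f = (\<Sum>a\<le>n. cscale (f (repc n a)) (sv n a))"
    proof
      fix xs :: "bool list"
      show "f xs = (\<Sum>a\<le>n. cscale (f (repc n a)) (sv n a)) xs"
      proof (cases "length xs = n")
        case True
        have c: "cnt xs \<le> n" using True cnt_le by metis
        have "(\<Sum>a\<le>n. cscale (f (repc n a)) (sv n a)) xs = (\<Sum>a\<le>n. if a = cnt xs then f (repc n a) else 0)"
          unfolding fun_sum_apply by (intro sum.cong refl) (auto simp: sv_def True cscale_apply)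
        also have "\<dots> = f (repc n (cnt xs))" using c by simp
        also have "\<dots> = f xs" using fsym[of "repc n (cnt xs)" xs] True c by simp
        finally show ?thesis by simp
      next
        case False
        then show ?thesis using ftens unfolding fun_sum_apply by (simp add: sv_def tens_def cscale_apply)
      qed
    qed
    show "f \<in> V.span (sv n ` {..n})"
      by (subst eq, intro V.span_sum V.span_scale V.span_base) auto
  qed
qed

fun ev :: "nat \<Rightarrow> nat list \<Rightarrow> bool list \<Rightarrow> complex" where
  "ev n [] = unitv"
| "ev n (a # w) = tp n (sv n a) (ev n w)"

definition Wd :: "nat \<Rightarrow> nat \<Rightarrow> nat list set" where
  "Wd n m = {w. set w \<subseteq> {..n} \<and> length w = m}"

lemma finite_Wd[simp]: "finite (Wd n m)"
  unfolding Wd_def by (rule finite_lists_length_eq) simp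

lemma card_Wd: "card (Wd n m) = (n + 1) ^ m"
  unfolding Wd_def by (subst card_lists_length_eq) auto

lemma Wd_Suc: "Wd n (Suc m) = {a # w | a w. a \<le> n \<and> w \<in> Wd n m}"
  by (auto simp: Wd_def length_Suc_conv)

lemma Wd_0[simp]: "Wd n 0 = {[]}" by (auto simp: Wd_def)

lemma unitv_tens: "unitv \<in> tens 0" by (simp add: unitv_def tens_def)

lemma ev_tens: "ev n w \<in> tens (n * length w)"
proof (induction w)
  case Nil then show ?case by (simp add: unitv_tens)
next
  case (Cons a w)
  have "tp n (sv n a) (ev n w) \<in> tens (n + n * length w)" by (rule tp_tens[OF sv_tens Cons.IH])
  then show ?case by simp
qed

lemma Lpow_span: "Lpow n m = V.span (ev n ` Wd n m)"
proof (induction m)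
  case 0
  then show ?case by simp
next
  case (Suc m)
  have "Lpow n (Suc m) = tprod n (V.span (sv n ` {..n})) (V.span (ev n ` Wd n m))"
    using Suc by (simp add: Lsym_span)
  also have "\<dots> = V.span {tp n a b |a b. a \<in> sv n ` {..n} \<and> b \<in> ev n ` Wd n m}"
    by (rule tprod_span)
  also have "{tp n a b |a b. a \<in> sv n ` {..n} \<and> b \<in> ev n ` Wd n m} = ev n ` Wd n (Suc m)"
  proof
    show "{tp n a b |a b. a \<in> sv n ` {..n} \<and> b \<in> ev n ` Wd n m} \<subseteq> ev n ` Wd n (Suc m)"
    proof
      fix x assume "x \<in> {tp n a b |a b. a \<in> sv n ` {..n} \<and> b \<in> ev n ` Wd n m}"
      then obtain a w where "a \<le> n" "w \<in> Wd n m" "x = tp n (sv n a) (ev n w)" by auto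
      then have "x = ev n (a # w)" "a # w \<in> Wd n (Suc m)" unfolding Wd_Suc by auto
      then show "x \<in> ev n ` Wd n (Suc m)" by blast
    qed
    show "ev n ` Wd n (Suc m) \<subseteq> {tp n a b |a b. a \<in> sv n ` {..n} \<and> b \<in> ev n ` Wd n m}"
    proof
      fix x assume "x \<in> ev n ` Wd n (Suc m)"
      then obtain a w where "a \<le> n" "w \<in> Wd n m" "x = ev n (a # w)" unfolding Wd_Suc by auto
      then show "x \<in> {tp n a b |a b. a \<in> sv n ` {..n} \<and> b \<in> ev n ` Wd n m}" by auto
    qed
  qed
  finally show ?case .
qed

definition rep :: "nat \<Rightarrow> nat list \<Rightarrow> bool list" where
  "rep n w = concat (map (repc n) w)"

lemma rep_simps[simp]: "rep n [] = []" "rep n (a # w) = repc n a @ rep n w"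
  "rep n (u @ v) = rep n u @ rep n v"
  by (simp_all add: rep_def)

lemma rep_len: "set w \<subseteq> {..n} \<Longrightarrow> length (rep n w) = n * length w"
  by (induction w) auto

lemma sv_repc: "b \<le> n \<Longrightarrow> sv n a (repc n b) = (if a = b then 1 else 0)"
  by (simp add: sv_def)

lemma ev_rep: "set w' \<subseteq> {..n} \<Longrightarrow> length w = length w' \<Longrightarrow>
    ev n w (rep n w') = (if w = w' then 1 else 0)"
proof (induction w arbitrary: w')
  case Nil
  then show ?case by (simp add: unitv_def)
next
  case (Cons a w)
  then obtain b w'' where w': "w' = b # w''" by (cases w') auto
  have "ev n (a # w) (rep n w') = sv n a (repc n b) * ev n w (rep n w'')"
    using Cons.prems w' by (simp add: tp_apply)
  then show ?case using Cons w' by (auto simp: sv_repc)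
qed

lemma tri_indep:
  fixes v :: "'i \<Rightarrow> bool list \<Rightarrow> complex" and p :: "'i \<Rightarrow> bool list" and key :: "'i \<Rightarrow> nat"
  assumes fin: "finite I" and diag: "\<And>i. i \<in> I \<Longrightarrow> v i (p i) \<noteq> 0"
    and tri: "\<And>i j. i \<in> I \<Longrightarrow> j \<in> I \<Longrightarrow> i \<noteq> j \<Longrightarrow> v j (p i) \<noteq> 0 \<Longrightarrow> key j < key i"
  shows "V.independent (v ` I) \<and> inj_on v I"
proof
  show inj: "inj_on v I"
  proof (rule inj_onI, rule ccontr)
    fix i j assume ij: "i \<in> I" "j \<in> I" "v i = v j" "i \<noteq> j"
    then have "key j < key i" using diag tri by metis
    moreover have "key i < key j" using ij diag tri by metis
    ultimately show False by simp
  qed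
  show "V.independent (v ` I)"
  proof (rule V.independent_if_scalars_zero)
    show "finite (v ` I)" using fin by simp
    fix f x assume s: "(\<Sum>x\<in>v ` I. cscale (f x) x) = 0" and x: "x \<in> v ` I"
    define c where "c i = f (v i)" for i
    have s2: "(\<Sum>i\<in>I. cscale (c i) (v i)) = 0"
      using s unfolding sum.reindex[OF inj] c_def by (simp add: comp_def)
    show "f x = 0"
    proof (rule ccontr)
      assume fx: "f x \<noteq> 0"
      define J where "J = {i\<in>I. c i \<noteq> 0}"
      have J: "finite J" "J \<noteq> {}" using fin x fx by (auto simp: J_def c_def)
      define k where "k = Min (key ` J)"
      have "k \<in> key ` J" unfolding k_def using J by (intro Min_in) auto
      then obtain i0 where i0: "i0 \<in> J" "key i0 = k" by auto
      have kmin: "\<And>j. j \<in> J \<Longrightarrow> k \<le> key j" using J k_def by auto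
      have "0 = (\<Sum>i\<in>I. cscale (c i) (v i)) (p i0)" using s2 by simp
      also have "\<dots> = (\<Sum>i\<in>I. c i * v i (p i0))" by (simp add: fun_sum_apply cscale_apply)
      also have "\<dots> = c i0 * v i0 (p i0) + (\<Sum>i\<in>I - {i0}. c i * v i (p i0))"
        using i0 fin by (subst sum.remove[of _ i0]) (auto simp: J_def)
      also have "(\<Sum>i\<in>I - {i0}. c i * v i (p i0)) = 0"
      proof (rule sum.neutral, rule ballI)
        fix i assume i: "i \<in> I - {i0}"
        show "c i * v i (p i0) = 0"
        proof (cases "c i = 0")
          case False
          then have "i \<in> J" using i by (auto simp: J_def)
          then have "k \<le> key i" by (rule kmin)
          then have "v i (p i0) = 0" using tri[of i0 i] i i0 by (force simp: J_def)
          then show ?thesis by simp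
        qed simp
      qed
      finally have "c i0 * v i0 (p i0) = 0" by simp
      then show False using i0 diag by (auto simp: J_def)
    qed
  qed
qed



lemma prod_add_split: "(\<Prod>k<n + m. G k) = (\<Prod>k<n. G k) * (\<Prod>k<m. G (n + k))"
  for G :: "nat \<Rightarrow> complex"
  by (induction m) (simp_all add: ac_simps)

lemma LN_Suc: "LN (Suc N) = Cons False ` LN N \<union> Cons True ` LN N"
proof
  show "LN (Suc N) \<subseteq> Cons False ` LN N \<union> Cons True ` LN N"
  proof
    fix xs assume "xs \<in> LN (Suc N)"
    then obtain b ys where "xs = b # ys" "ys \<in> LN N" by (cases xs) (auto simp: LN_def)
    then show "xs \<in> Cons False ` LN N \<union> Cons True ` LN N" by (cases b) auto
  qed
qed (auto simp: LN_def)

lemma sum_LN_Suc: "(\<Sum>ys\<in>LN (Suc N). G ys) = (\<Sum>ys\<in>LN N. G (False # ys)) + (\<Sum>ys\<in>LN N. G (True # ys))"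
proof -
  have "(\<Sum>ys\<in>LN (Suc N). G ys) = (\<Sum>ys\<in>Cons False ` LN N. G ys) + (\<Sum>ys\<in>Cons True ` LN N. G ys)"
    unfolding LN_Suc by (rule sum.union_disjoint) auto
  also have "\<dots> = (\<Sum>ys\<in>LN N. G (False # ys)) + (\<Sum>ys\<in>LN N. G (True # ys))"
    by (simp add: sum.reindex)
  finally show ?thesis .
qed

lemma sum_prod_LN:
  "(\<Sum>ys\<in>LN N. \<Prod>k<N. F k (ys ! k)) = (\<Prod>k<N. F k False + F k True)"
  for F :: "nat \<Rightarrow> bool \<Rightarrow> complex"
proof (induction N arbitrary: F)
  case 0
  then show ?case by (simp add: LN_def)
next
  case (Suc N)
  have "(\<Sum>ys\<in>LN (Suc N). \<Prod>k<Suc N. F k (ys ! k)) =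
     F 0 False * (\<Sum>ys\<in>LN N. \<Prod>k<N. F (Suc k) (ys ! k)) + F 0 True * (\<Sum>ys\<in>LN N. \<Prod>k<N. F (Suc k) (ys ! k))"
    unfolding sum_LN_Suc by (simp del: prod.lessThan_Suc add: prod.lessThan_Suc_shift sum_distrib_left)
  also have "\<dots> = (\<Prod>k<Suc N. F k False + F k True)"
    using Suc.IH[of "\<lambda>k. F (Suc k)"] by (simp del: prod.lessThan_Suc add: prod.lessThan_Suc_shift algebra_simps)
  finally show ?case .
qed

lemma sum_prod_LN2:
  "(\<Sum>u\<in>LN N. \<Sum>v\<in>LN N. \<Prod>k<N. F k (u ! k) (v ! k)) =
   (\<Prod>k<N. F k False False + F k False True + F k True False + F k True True)"
  for F :: "nat \<Rightarrow> bool \<Rightarrow> bool \<Rightarrow> complex"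
proof (induction N arbitrary: F)
  case 0
  then show ?case by (simp add: LN_def)
next
  case (Suc N)
  define S where "S = (\<Sum>u\<in>LN N. \<Sum>v\<in>LN N. \<Prod>k<N. F (Suc k) (u ! k) (v ! k))"
  have "(\<Sum>u\<in>LN (Suc N). \<Sum>v\<in>LN (Suc N). \<Prod>k<Suc N. F k (u ! k) (v ! k)) =
     (F 0 False False + F 0 False True + F 0 True False + F 0 True True) * S"
    unfolding sum_LN_Suc S_def by (simp del: prod.lessThan_Suc add: prod.lessThan_Suc_shift sum_distrib_left sum.distrib algebra_simps)
  also have "\<dots> = (\<Prod>k<Suc N. F k False False + F k False True + F k True False + F k True True)"
    using Suc.IH[of "\<lambda>k. F (Suc k)"] unfolding S_def by (simp del: prod.lessThan_Suc add: prod.lessThan_Suc_shift algebra_simps)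
  finally show ?case .
qed

lemma tact_LN: "tact g f xs = (\<Sum>ys\<in>LN (length xs). (\<Prod>k<length xs. g (xs ! k) (ys ! k)) * f ys)"
  by (simp add: tact_def LN_def)

definition mm :: "(bool \<Rightarrow> bool \<Rightarrow> complex) \<Rightarrow> (bool \<Rightarrow> bool \<Rightarrow> complex) \<Rightarrow> (bool \<Rightarrow> bool \<Rightarrow> complex)" where
  "mm A B = (\<lambda>i j. A i False * B False j + A i True * B True j)"

lemma tact_comp: "tact A (tact B h) xs = tact (mm A B) h xs"
proof -
  define N where "N = length xs"
  have "tact A (tact B h) xs = (\<Sum>ys\<in>LN N. \<Sum>zs\<in>LN N.
      (\<Prod>k<N. A (xs ! k) (ys ! k)) * ((\<Prod>k<N. B (ys ! k) (zs ! k)) * h zs))"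
    unfolding tact_LN N_def by (intro sum.cong refl) (simp add: LN_def sum_distrib_left)
  also have "\<dots> = (\<Sum>zs\<in>LN N. \<Sum>ys\<in>LN N.
      (\<Prod>k<N. A (xs ! k) (ys ! k) * B (ys ! k) (zs ! k)) * h zs)"
    by (subst sum.swap) (simp add: prod.distrib mult.assoc)
  also have "\<dots> = (\<Sum>zs\<in>LN N. (\<Prod>k<N. mm A B (xs ! k) (zs ! k)) * h zs)"
  proof (intro sum.cong refl)
    fix zs
    show "(\<Sum>ys\<in>LN N. (\<Prod>k<N. A (xs ! k) (ys ! k) * B (ys ! k) (zs ! k)) * h zs) =
       (\<Prod>k<N. mm A B (xs ! k) (zs ! k)) * h zs"
      using sum_prod_LN[where N=N and F="\<lambda>k y. A (xs ! k) y * B y (zs ! k)"]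
      by (simp add: sum_distrib_right[symmetric] mm_def)
  qed
  finally show ?thesis unfolding tact_LN N_def .
qed

lemma prod_zero_if_diff:
  fixes g :: "bool \<Rightarrow> bool \<Rightarrow> complex"
  assumes "\<And>i j. i \<noteq> j \<Longrightarrow> g i j = 0" "ys \<in> LN (length xs)" "ys \<noteq> xs"
  shows "(\<Prod>k<length xs. g (xs ! k) (ys ! k)) = 0"
proof -
  obtain k where k: "k < length xs" "xs ! k \<noteq> ys ! k"
    using assms(2,3) nth_equalityI[of xs ys] by (auto simp: LN_def)
  have "g (xs ! k) (ys ! k) = 0" using k(2) by (rule assms(1))
  then show ?thesis by (intro prod_zero) (use k in blast)+
qed

lemma tact_diag:
  fixes g :: "bool \<Rightarrow> bool \<Rightarrow> complex"
  assumes "\<And>i j. i \<noteq> j \<Longrightarrow> g i j = 0"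
  shows "tact g f xs = (\<Prod>k<length xs. g (xs ! k) (xs ! k)) * f xs"
proof -
  have xs: "xs \<in> LN (length xs)" by (simp add: LN_def)
  have "tact g f xs = (\<Prod>k<length xs. g (xs ! k) (xs ! k)) * f xs +
      (\<Sum>ys\<in>LN (length xs) - {xs}. (\<Prod>k<length xs. g (xs ! k) (ys ! k)) * f ys)"
    unfolding tact_LN by (subst sum.remove[OF finite_LN xs]) simp
  also have "(\<Sum>ys\<in>LN (length xs) - {xs}. (\<Prod>k<length xs. g (xs ! k) (ys ! k)) * f ys) = 0"
  proof (intro sum.neutral ballI)
    fix ys assume "ys \<in> LN (length xs) - {xs}"
    then have "(\<Prod>k<length xs. g (xs ! k) (ys ! k)) = 0"
      by (intro prod_zero_if_diff[OF assms]) auto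
    then show "(\<Prod>k<length xs. g (xs ! k) (ys ! k)) * f ys = 0" by simp
  qed
  finally show ?thesis by simp
qed

definition Id2 :: "bool \<Rightarrow> bool \<Rightarrow> complex" where "Id2 = (\<lambda>i j. if i = j then 1 else 0)"

lemma tact_Id2: "tact Id2 f = f"
proof
  fix xs show "tact Id2 f xs = f xs" by (subst tact_diag) (simp_all add: Id2_def)
qed

lemma tact_add: "tact g (f + h) = tact g f + tact g h"
  by (simp add: tact_def fun_eq_iff sum.distrib algebra_simps)

lemma tact_scale: "tact g (cscale c f) = cscale c (tact g f)"
  by (simp add: tact_def fun_eq_iff sum_distrib_left algebra_simps cscale_apply)

lemma tact_zero: "tact g 0 = 0"
  by (simp add: tact_def fun_eq_iff)

lemma tact_sum: "finite I \<Longrightarrow> tact g (\<lambda>xs. \<Sum>i\<in>I. F i xs) xs = (\<Sum>i\<in>I. tact g (F i) xs)"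
  unfolding tact_LN by (simp add: sum_distrib_left) (rule sum.swap)

lemma tact_split:
  assumes "length u0 = n" "length v0 = m"
  shows "tact g f (u0 @ v0) = (\<Sum>u\<in>LN n. \<Sum>v\<in>LN m.
     ((\<Prod>k<n. g (u0 ! k) (u ! k)) * (\<Prod>k<m. g (v0 ! k) (v ! k))) * f (u @ v))"
proof -
  have "tact g f (u0 @ v0) = (\<Sum>y\<in>LN (n + m). (\<Prod>k<n + m. g ((u0 @ v0) ! k) (y ! k)) * f y)"
    unfolding tact_LN using assms by simp
  also have "\<dots> = (\<Sum>u\<in>LN n. \<Sum>v\<in>LN m. (\<Prod>k<n + m. g ((u0 @ v0) ! k) ((u @ v) ! k)) * f (u @ v))"
    by (rule sum_LN_add)
  also have "\<dots> = (\<Sum>u\<in>LN n. \<Sum>v\<in>LN m.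
     ((\<Prod>k<n. g (u0 ! k) (u ! k)) * (\<Prod>k<m. g (v0 ! k) (v ! k))) * f (u @ v))"
    unfolding prod_add_split using assms by (intro sum.cong refl) (simp add: LN_def nth_append)
  finally show ?thesis .
qed

lemma permute_list_bij:
  assumes "\<pi> permutes {..<N}"
  shows "bij_betw (permute_list \<pi>) (LN N) (LN N)"
proof (rule bij_betw_byWitness[where f'="permute_list (inv \<pi>)"])
  have pi': "inv \<pi> permutes {..<N}" using assms by (rule permutes_inv)
  show "\<forall>a\<in>LN N. permute_list (inv \<pi>) (permute_list \<pi> a) = a"
  proof
    fix a assume "a \<in> LN N"
    then have "permute_list (\<pi> \<circ> inv \<pi>) a = permute_list (inv \<pi>) (permute_list \<pi> a)"
      using pi' by (intro permute_list_compose) (simp add: LN_def)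
    then show "permute_list (inv \<pi>) (permute_list \<pi> a) = a"
      using permutes_inv_o(1)[OF assms] by simp
  qed
  show "\<forall>a\<in>LN N. permute_list \<pi> (permute_list (inv \<pi>) a) = a"
  proof
    fix a assume "a \<in> LN N"
    then have "permute_list (inv \<pi> \<circ> \<pi>) a = permute_list \<pi> (permute_list (inv \<pi>) a)"
      using assms by (intro permute_list_compose) (simp add: LN_def)
    then show "permute_list \<pi> (permute_list (inv \<pi>) a) = a"
      using permutes_inv_o(2)[OF assms] by simp
  qed
qed (auto simp: LN_def)

lemma sum_reindex_perm:
  assumes "\<pi> permutes {..<N}" "length x = N"
  shows "(\<Sum>y\<in>LN N. (\<Prod>k<N. g (x ! k) (y ! k)) * F (permute_list \<pi> y)) =
         (\<Sum>y\<in>LN N. (\<Prod>k<N. g (permute_list \<pi> x ! k) (y ! k)) * F y)"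
proof -
  have "(\<Sum>y\<in>LN N. (\<Prod>k<N. g (permute_list \<pi> x ! k) (y ! k)) * F y) =
     (\<Sum>y\<in>LN N. (\<Prod>k<N. g (permute_list \<pi> x ! k) (permute_list \<pi> y ! k)) * F (permute_list \<pi> y))"
    by (rule sum.reindex_bij_betw[OF permute_list_bij[OF assms(1)], symmetric])
  also have "\<dots> = (\<Sum>y\<in>LN N. (\<Prod>k<N. g (x ! \<pi> k) (y ! \<pi> k)) * F (permute_list \<pi> y))"
    using assms by (intro sum.cong refl) (simp add: permute_list_nth LN_def)
  also have "\<dots> = (\<Sum>y\<in>LN N. (\<Prod>k<N. g (x ! k) (y ! k)) * F (permute_list \<pi> y))"
    using prod.permute[OF assms(1), of "\<lambda>k. g (x ! k) (_ ! k)"] by (simp add: comp_def)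
  finally show ?thesis by simp
qed



section \<open>Torus elements and weights\<close>

definition gt :: "real \<Rightarrow> bool \<Rightarrow> bool \<Rightarrow> complex" where
  "gt \<theta> = (\<lambda>i j. if i = j then (if i then cis (-\<theta>) else cis \<theta>) else 0)"

lemma sum_UNIV_bool: "(\<Sum>k\<in>UNIV. F k) = F False + F True" for F :: "bool \<Rightarrow> complex"
  by (simp add: UNIV_bool)

lemma gt_SU2: "gt \<theta> \<in> SU2"
  unfolding SU2_def gt_def
  by (auto simp: sum_UNIV_bool cis_cnj cis_mult)

lemma prod_gt: "(\<Prod>k<length xs. gt \<theta> (xs ! k) (xs ! k)) = cis (\<theta> * (real (length xs) - 2 * real (cnt xs)))"
proof (induction xs)
  case Nil then show ?case by simp
next
  case (Cons a xs)
  have "(\<Prod>k<length (a # xs). gt \<theta> ((a # xs) ! k) ((a # xs) ! k)) =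
      gt \<theta> a a * (\<Prod>k<length xs. gt \<theta> (xs ! k) (xs ! k))"
    by (simp del: prod.lessThan_Suc add: prod.lessThan_Suc_shift)
  also have "\<dots> = gt \<theta> a a * cis (\<theta> * (real (length xs) - 2 * real (cnt xs)))" using Cons by simp
  also have "\<dots> = cis (\<theta> * (real (length (a # xs)) - 2 * real (cnt (a # xs))))"
    by (cases a) (simp_all add: gt_def cis_mult algebra_simps)
  finally show ?case .
qed

lemma weight:
  assumes inv: "\<And>\<theta>. tact (gt \<theta>) f = f" and nz: "f xs \<noteq> 0"
  shows "2 * cnt xs = length xs"
proof -
  define N where "N = length xs"
  define D where "D = real N - 2 * real (cnt xs)"
  define \<theta> where "\<theta> = 2 * pi / (real N + 1)"
  have "tact (gt \<theta>) f xs = (\<Prod>k<length xs. gt \<theta> (xs ! k) (xs ! k)) * f xs"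
    by (rule tact_diag) (simp add: gt_def)
  then have "tact (gt \<theta>) f xs = cis (\<theta> * D) * f xs"
    by (simp add: prod_gt D_def N_def)
  then have "cis (\<theta> * D) * f xs = f xs" using inv by simp
  then have "cis (\<theta> * D) = 1" using nz by simp
  then have "cos (\<theta> * D) = 1" by (metis cis.sel(1) one_complex.sel(1))
  then obtain k :: int where k: "\<theta> * D = k * 2 * pi" by (auto simp: cos_one_2pi_int)
  then have "(D - k * (real N + 1)) * (2 * pi) = 0"
    unfolding \<theta>_def by (simp add: field_simps)
  then have Dk: "D = k * (real N + 1)" by simp
  have c: "cnt xs \<le> N" using cnt_le N_def by metis
  have "k = 0"
  proof (rule ccontr)
    assume "k \<noteq> 0"
    then have "\<bar>real_of_int k\<bar> \<ge> 1" by linarith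
    have "\<bar>D\<bar> = \<bar>real_of_int k\<bar> * (real N + 1)" unfolding Dk abs_mult by simp
    moreover have "\<bar>real_of_int k\<bar> * (real N + 1) \<ge> 1 * (real N + 1)"
      using \<open>\<bar>real_of_int k\<bar> \<ge> 1\<close> by (intro mult_right_mono) auto
    ultimately have "\<bar>D\<bar> \<ge> 1 * (real N + 1)" by simp
    moreover have "\<bar>D\<bar> \<le> real N" unfolding D_def using c by auto
    ultimately show False by simp
  qed
  then have "D = 0" using Dk by simp
  then show ?thesis unfolding D_def N_def by linarith
qed

section \<open>A rotation and its inverse\<close>

definition rr :: complex where "rr = complex_of_real (sqrt (1/2))"

lemma rr_sq: "2 * (rr * rr) = 1"
proof -
  have "sqrt (1/2) * sqrt (1/2) = (1/2::real)" by simp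
  then have e: "rr * rr = complex_of_real (1/2)" unfolding rr_def by (metis of_real_mult)
  have "2 * (rr * rr) = 2 * complex_of_real (1/2)" by (simp only: e)
  also have "\<dots> = 1" by simp
  finally show ?thesis .
qed

lemma rr_sq2: "rr * rr * 2 = 1" "rr * rr + rr * rr = 1"
  using rr_sq by (simp_all add: mult.commute)

lemma rr_nz: "rr \<noteq> 0" by (simp add: rr_def)

lemma rr_cnj: "cnj rr = rr" by (simp add: rr_def)

definition g0 :: "bool \<Rightarrow> bool \<Rightarrow> complex" where
  "g0 = (\<lambda>i j. if i then (if j then rr else - rr) else rr)"

definition g1 :: "bool \<Rightarrow> bool \<Rightarrow> complex" where
  "g1 = (\<lambda>i j. if j then (if i then rr else - rr) else rr)"

lemma g0_SU2: "g0 \<in> SU2"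
proof -
  show ?thesis unfolding SU2_def g0_def
    by (auto simp: sum_UNIV_bool rr_cnj rr_sq rr_sq2)
qed

lemma g1_g0: "mm g1 g0 = Id2"
proof -
  show ?thesis by (auto simp: mm_def g0_def g1_def Id2_def fun_eq_iff rr_sq rr_sq2)
qed

lemma tact_g0_inj: "tact g0 h = 0 \<Longrightarrow> h = 0"
proof -
  assume h: "tact g0 h = 0"
  have "h = tact Id2 h" by (simp add: tact_Id2)
  also have "\<dots> = tact g1 (tact g0 h)" by (simp add: fun_eq_iff tact_comp g1_g0)
  also have "\<dots> = 0" by (simp add: h tact_zero)
  finally show ?thesis .
qed

section \<open>The invariant vector\<close>

definition eps :: "bool \<Rightarrow> bool \<Rightarrow> complex" where
  "eps a b = (if a = b then 0 else if a then -1 else 1)"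

lemma SU2_eps:
  assumes "g \<in> SU2"
  shows "g p False * g q False * eps False False + g p False * g q True * eps False True +
         g p True * g q False * eps True False + g p True * g q True * eps True True = eps p q"
proof -
  have d: "g False False * g True True - g False True * g True False = 1"
    using assms by (simp add: SU2_def)
  show ?thesis
  proof (cases p; cases q)
    assume "p" "\<not> q" then show ?thesis using d by (simp add: eps_def algebra_simps)
  qed (use d in \<open>auto simp: eps_def algebra_simps\<close>)
qed

definition w0 :: "nat \<Rightarrow> bool list \<Rightarrow> complex" where
  "w0 n x = (if length x = 2 * n then (\<Prod>j<n. eps (x ! j) (x ! (n + j))) else 0)"

lemma w0_app: "length u = n \<Longrightarrow> length v = n \<Longrightarrow> w0 n (u @ v) = (\<Prod>j<n. eps (u ! j) (v ! j))"
  by (auto simp: w0_def nth_append intro!: prod.cong)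

lemma tact_zero_len:
  assumes "\<And>y. length y = length x \<Longrightarrow> f y = 0"
  shows "tact g f x = 0"
  using assms by (simp add: tact_LN LN_def)

lemma w0_inv:
  assumes g: "g \<in> SU2"
  shows "tact g (w0 n) x = w0 n x"
proof (cases "length x = 2 * n")
  case False
  then show ?thesis by (subst tact_zero_len) (auto simp: w0_def)
next
  case True
  define u0 where "u0 = take n x"
  define v0 where "v0 = drop n x"
  have x: "x = u0 @ v0" and l: "length u0 = n" "length v0 = n" using True by (auto simp: u0_def v0_def)
  have "tact g (w0 n) (u0 @ v0) = (\<Sum>u\<in>LN n. \<Sum>v\<in>LN n.
     ((\<Prod>k<n. g (u0 ! k) (u ! k)) * (\<Prod>k<n. g (v0 ! k) (v ! k))) * w0 n (u @ v))"
    by (rule tact_split[OF l])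
  also have "\<dots> = (\<Sum>u\<in>LN n. \<Sum>v\<in>LN n. \<Prod>k<n. g (u0 ! k) (u ! k) * g (v0 ! k) (v ! k) * eps (u ! k) (v ! k))"
    by (intro sum.cong refl) (simp add: w0_app LN_def prod.distrib)
  also have "\<dots> = (\<Prod>k<n. eps (u0 ! k) (v0 ! k))"
    by (subst sum_prod_LN2[where F="\<lambda>k a b. g (u0 ! k) a * g (v0 ! k) b * eps a b"])
      (simp add: SU2_eps[OF g])
  also have "\<dots> = w0 n (u0 @ v0)" using l by (simp add: w0_app)
  finally show ?thesis using x by simp
qed

definition Pm :: "nat \<Rightarrow> (nat \<Rightarrow> nat) set" where "Pm n = {\<pi>. \<pi> permutes {..<n}}"

lemma finite_Pm[simp]: "finite (Pm n)"
  by (simp add: Pm_def finite_permutations)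

definition om :: "nat \<Rightarrow> bool list \<Rightarrow> complex" where
  "om n x = (\<Sum>\<pi>\<in>Pm n. \<Sum>\<sigma>\<in>Pm n. w0 n (permute_list \<pi> (take n x) @ permute_list \<sigma> (drop n x)))"

lemma om_term_inv:
  assumes g: "g \<in> SU2" and \<pi>: "\<pi> \<in> Pm n" and \<sigma>: "\<sigma> \<in> Pm n"
  shows "tact g (\<lambda>y. w0 n (permute_list \<pi> (take n y) @ permute_list \<sigma> (drop n y))) x =
         w0 n (permute_list \<pi> (take n x) @ permute_list \<sigma> (drop n x))"
proof (cases "length x = 2 * n")
  case False
  then show ?thesis by (subst tact_zero_len) (auto simp: w0_def)
next
  case True
  define u0 where "u0 = take n x"
  define v0 where "v0 = drop n x"
  have x: "x = u0 @ v0" and l: "length u0 = n" "length v0 = n" using True by (auto simp: u0_def v0_def)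
  have p: "\<pi> permutes {..<n}" "\<sigma> permutes {..<n}" using \<pi> \<sigma> by (auto simp: Pm_def)
  define P where "P a b = (\<Prod>k<n. g (a ! k) (b ! k))" for a b
  have "tact g (\<lambda>y. w0 n (permute_list \<pi> (take n y) @ permute_list \<sigma> (drop n y))) (u0 @ v0) =
     (\<Sum>u\<in>LN n. \<Sum>v\<in>LN n. (P u0 u * P v0 v) * w0 n (permute_list \<pi> u @ permute_list \<sigma> v))"
    unfolding tact_split[OF l] P_def by (intro sum.cong refl) (simp add: LN_def)
  also have "\<dots> = (\<Sum>u\<in>LN n. P u0 u * (\<Sum>v\<in>LN n. P v0 v * w0 n (permute_list \<pi> u @ permute_list \<sigma> v)))"
    by (simp add: sum_distrib_left mult.assoc)
  also have "\<dots> = (\<Sum>u\<in>LN n. P u0 u * (\<Sum>v\<in>LN n. P (permute_list \<sigma> v0) v * w0 n (permute_list \<pi> u @ v)))"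
  proof (intro sum.cong refl)
    fix u show "P u0 u * (\<Sum>v\<in>LN n. P v0 v * w0 n (permute_list \<pi> u @ permute_list \<sigma> v)) =
      P u0 u * (\<Sum>v\<in>LN n. P (permute_list \<sigma> v0) v * w0 n (permute_list \<pi> u @ v))"
      using sum_reindex_perm[OF p(2) l(2), where g=g and F="\<lambda>v. w0 n (permute_list \<pi> u @ v)"]
      unfolding P_def by simp
  qed
  also have "\<dots> = (\<Sum>v\<in>LN n. P (permute_list \<sigma> v0) v * (\<Sum>u\<in>LN n. P u0 u * w0 n (permute_list \<pi> u @ v)))"
    by (simp add: sum_distrib_left algebra_simps) (rule sum.swap)
  also have "\<dots> = (\<Sum>v\<in>LN n. P (permute_list \<sigma> v0) v * (\<Sum>u\<in>LN n. P (permute_list \<pi> u0) u * w0 n (u @ v)))"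
  proof (intro sum.cong refl)
    fix v show "P (permute_list \<sigma> v0) v * (\<Sum>u\<in>LN n. P u0 u * w0 n (permute_list \<pi> u @ v)) =
      P (permute_list \<sigma> v0) v * (\<Sum>u\<in>LN n. P (permute_list \<pi> u0) u * w0 n (u @ v))"
      using sum_reindex_perm[OF p(1) l(1), where g=g and F="\<lambda>u. w0 n (u @ v)"]
      unfolding P_def by simp
  qed
  also have "\<dots> = (\<Sum>u\<in>LN n. \<Sum>v\<in>LN n. (P (permute_list \<pi> u0) u * P (permute_list \<sigma> v0) v) * w0 n (u @ v))"
    by (simp add: sum_distrib_left algebra_simps) (rule sum.swap)
  also have "\<dots> = tact g (w0 n) (permute_list \<pi> u0 @ permute_list \<sigma> v0)"
    unfolding P_def using l by (subst tact_split) simp_all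
  also have "\<dots> = w0 n (permute_list \<pi> u0 @ permute_list \<sigma> v0)" by (rule w0_inv[OF g])
  finally show ?thesis using x l by simp
qed

lemma om_inv:
  assumes g: "g \<in> SU2"
  shows "tact g (om n) = om n"
proof
  fix x
  have "tact g (om n) x = (\<Sum>\<pi>\<in>Pm n. tact g (\<lambda>y. \<Sum>\<sigma>\<in>Pm n. w0 n (permute_list \<pi> (take n y) @ permute_list \<sigma> (drop n y))) x)"
    unfolding om_def[abs_def] by (rule tact_sum) simp
  also have "\<dots> = (\<Sum>\<pi>\<in>Pm n. \<Sum>\<sigma>\<in>Pm n. tact g (\<lambda>y. w0 n (permute_list \<pi> (take n y) @ permute_list \<sigma> (drop n y))) x)"
    by (intro sum.cong refl tact_sum) simp
  also have "\<dots> = om n x"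
    unfolding om_def by (intro sum.cong refl om_term_inv[OF g])
  finally show "tact g (om n) x = om n x" .
qed



lemma om_sym1:
  assumes l: "length u = n" "length u' = n" and c: "cnt u = cnt u'"
  shows "om n (u @ v) = om n (u' @ v)"
proof -
  have "mset u' = mset u" using l c by (intro mset_eq_cnt) auto
  then obtain p where p: "p permutes {..<length u}" "permute_list p u = u'"
    by (rule mset_eq_permutation)
  have pn: "p permutes {..<n}" using p l by simp
  define F where "F \<pi> = (\<Sum>\<sigma>\<in>Pm n. w0 n (permute_list \<pi> u @ permute_list \<sigma> v))" for \<pi>
  have "om n (u' @ v) = (\<Sum>\<pi>\<in>Pm n. F (p \<circ> \<pi>))"
    unfolding om_def
  proof (intro sum.cong refl)
    fix \<pi> assume "\<pi> \<in> Pm n"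
    then have "\<pi> permutes {..<length u}" using l by (simp add: Pm_def)
    then have "permute_list (p \<circ> \<pi>) u = permute_list \<pi> u'" using p by (simp add: permute_list_compose)
    then show "(\<Sum>\<sigma>\<in>Pm n. w0 n (permute_list \<pi> (take n (u' @ v)) @ permute_list \<sigma> (drop n (u' @ v)))) = F (p \<circ> \<pi>)"
      unfolding F_def using l by simp
  qed
  also have "\<dots> = (\<Sum>\<pi>\<in>Pm n. F \<pi>)"
    unfolding Pm_def by (rule setum_permutations_compose_left[OF pn, symmetric])
  also have "\<dots> = om n (u @ v)" unfolding om_def F_def using l by simp
  finally show ?thesis by simp
qed

lemma om_sym2:
  assumes l: "length u = n" "length v = n" "length v' = n" and c: "cnt v = cnt v'"
  shows "om n (u @ v) = om n (u @ v')"
proof -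
  have "mset v' = mset v" using l c by (intro mset_eq_cnt) auto
  then obtain p where p: "p permutes {..<length v}" "permute_list p v = v'"
    by (rule mset_eq_permutation)
  have pn: "p permutes {..<n}" using p l by simp
  define F where "F \<sigma> = (\<Sum>\<pi>\<in>Pm n. w0 n (permute_list \<pi> u @ permute_list \<sigma> v))" for \<sigma>
  have "om n (u @ v') = (\<Sum>\<pi>\<in>Pm n. \<Sum>\<sigma>\<in>Pm n. w0 n (permute_list \<pi> u @ permute_list \<sigma> v'))"
    unfolding om_def using l by simp
  also have "\<dots> = (\<Sum>\<sigma>\<in>Pm n. \<Sum>\<pi>\<in>Pm n. w0 n (permute_list \<pi> u @ permute_list \<sigma> v'))"
    by (rule sum.swap)
  also have "\<dots> = (\<Sum>\<sigma>\<in>Pm n. F (p \<circ> \<sigma>))"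
    unfolding F_def
  proof (intro sum.cong refl)
    fix \<sigma> \<pi> assume "\<sigma> \<in> Pm n"
    then have "\<sigma> permutes {..<length v}" using l by (simp add: Pm_def)
    then have "permute_list (p \<circ> \<sigma>) v = permute_list \<sigma> v'" using p by (simp add: permute_list_compose)
    then show "w0 n (permute_list \<pi> u @ permute_list \<sigma> v') =
       w0 n (permute_list \<pi> u @ permute_list (p \<circ> \<sigma>) v)" by simp
  qed
  also have "\<dots> = (\<Sum>\<sigma>\<in>Pm n. F \<sigma>)"
    unfolding Pm_def by (rule setum_permutations_compose_left[OF pn, symmetric])
  also have "\<dots> = (\<Sum>\<pi>\<in>Pm n. \<Sum>\<sigma>\<in>Pm n. w0 n (permute_list \<pi> u @ permute_list \<sigma> v))"
    unfolding F_def by (rule sum.swap)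
  also have "\<dots> = om n (u @ v)" unfolding om_def using l by simp
  finally show ?thesis by simp
qed

lemma om_tens: "om n \<in> tens (n + n)"
  unfolding tens_def om_def by (auto simp: w0_def intro!: sum.neutral)

lemma sum_delta2:
  assumes "finite A" "finite B" "a0 \<in> A" "b0 \<in> B"
  shows "(\<Sum>a\<in>A. \<Sum>b\<in>B. if a = a0 \<and> b = b0 then X a b else 0) = (X a0 b0 :: complex)"
proof -
  have "(\<Sum>b\<in>B. if a = a0 \<and> b = b0 then X a b else 0) = (if a = a0 then X a b0 else 0)" for a
    using assms by (cases "a = a0") (simp_all add: sum.delta')
  then show ?thesis using assms by (simp add: sum.delta')
qed

lemma tprod_char:
  assumes f: "f \<in> tens (n + n)"
    and s1: "\<And>u u' v. length u = n \<Longrightarrow> length u' = n \<Longrightarrow> length v = n \<Longrightarrow> cnt u = cnt u' \<Longrightarrow> f (u @ v) = f (u' @ v)"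
    and s2: "\<And>u v v'. length u = n \<Longrightarrow> length v = n \<Longrightarrow> length v' = n \<Longrightarrow> cnt v = cnt v' \<Longrightarrow> f (u @ v) = f (u @ v')"
  shows "f \<in> tprod n (Lsym n) (Lsym n)"
proof -
  define G where "G a b = tp n (sv n a) (sv n b)" for a b
  have eq: "f = (\<Sum>a\<le>n. \<Sum>b\<le>n. cscale (f (repc n a @ repc n b)) (G a b))"
  proof
    fix xs :: "bool list"
    show "f xs = (\<Sum>a\<le>n. \<Sum>b\<le>n. cscale (f (repc n a @ repc n b)) (G a b)) xs"
    proof (cases "length xs = n + n")
      case True
      define u where "u = take n xs"
      define v where "v = drop n xs"
      have xs: "xs = u @ v" and l: "length u = n" "length v = n" using True by (auto simp: u_def v_def)
      have cu: "cnt u \<le> n" "cnt v \<le> n" using l cnt_le by metis+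
      have "(\<Sum>a\<le>n. \<Sum>b\<le>n. cscale (f (repc n a @ repc n b)) (G a b)) xs =
          (\<Sum>a\<le>n. \<Sum>b\<le>n. if a = cnt u \<and> b = cnt v then f (repc n a @ repc n b) else 0)"
        unfolding fun_sum_apply xs G_def
        by (intro sum.cong refl) (simp add: cscale_apply tp_apply[OF l(1)] sv_def l)
      also have "\<dots> = f (repc n (cnt u) @ repc n (cnt v))"
        using cu by (intro sum_delta2) auto
      also have "\<dots> = f (u @ repc n (cnt v))" using s1[of "repc n (cnt u)" u "repc n (cnt v)"] l cu by simp
      also have "\<dots> = f (u @ v)" using s2[of u "repc n (cnt v)" v] l cu by simp
      finally show ?thesis using xs by simp
    next
      case False
      have "G a b \<in> tens (n + n)" for a b unfolding G_def by (intro tp_tens sv_tens)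
      then show ?thesis using f False unfolding fun_sum_apply by (simp add: tens_def cscale_apply)
    qed
  qed
  have Gin: "G a b \<in> V.span {tp n a b |a b. a \<in> Lsym n \<and> b \<in> Lsym n}" for a b
    unfolding G_def by (rule V.span_base) (auto intro: sv_Lsym)
  have "(\<Sum>a\<le>n. \<Sum>b\<le>n. cscale (f (repc n a @ repc n b)) (G a b)) \<in> V.span {tp n a b |a b. a \<in> Lsym n \<and> b \<in> Lsym n}"
    by (intro V.span_sum V.span_scale Gin)
  then show ?thesis using eq tprod_tp by metis
qed

lemma om_D2: "om n \<in> D2 n"
  unfolding D2_def
proof (intro CollectI conjI ballI)
  show "om n \<in> tprod n (Lsym n) (Lsym n)"
    by (rule tprod_char[OF om_tens]) (auto intro: om_sym1 om_sym2)
  fix g assume "g \<in> SU2" then show "tact g (om n) = om n" by (rule om_inv)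
qed

lemma permute_list_replicate:
  assumes "\<pi> permutes {..<k}" shows "permute_list \<pi> (replicate k a) = replicate k a"
proof (rule nth_equalityI)
  fix i assume "i < length (permute_list \<pi> (replicate k a))"
  then have i: "i < k" by simp
  then have "\<pi> i < k" using permutes_in_image[OF assms, of i] by simp
  then show "permute_list \<pi> (replicate k a) ! i = replicate k a ! i"
    using i assms by (simp add: permute_list_nth)
qed simp

definition pt :: "nat \<Rightarrow> bool list" where "pt n = replicate n False @ replicate n True"

lemma om_pt: "om n (pt n) = of_nat (card (Pm n) * card (Pm n))"
proof -
  have "om n (pt n) = (\<Sum>\<pi>\<in>Pm n. \<Sum>\<sigma>\<in>Pm n. 1)"
    unfolding om_def pt_def
  proof (intro sum.cong refl)
    fix \<pi> \<sigma> assume "\<pi> \<in> Pm n" "\<sigma> \<in> Pm n"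
    then show "w0 n (permute_list \<pi> (take n (replicate n False @ replicate n True)) @
        permute_list \<sigma> (drop n (replicate n False @ replicate n True))) = 1"
      by (simp add: Pm_def permute_list_replicate w0_app eps_def)
  qed
  then show ?thesis by simp
qed

lemma om_pt_nz: "om n (pt n) \<noteq> 0"
proof -
  have "card (Pm n) = fact n" unfolding Pm_def by (rule card_permutations) auto
  then show ?thesis unfolding om_pt by simp
qed

lemma subspace_D2: "V.subspace (D2 n)"
  unfolding V.subspace_def D2_def tprod_tp
  by (auto intro: V.span_zero V.span_add V.span_scale simp: tact_zero tact_add tact_scale)

lemma tprod_Lsym_tens: "tprod n (Lsym n) (Lsym n) \<subseteq> tens (n + n)"
  unfolding tprod_tp by (rule span_tens) (auto intro: tp_tens Lsym_D(1))

lemma D2_tens: "f \<in> D2 n \<Longrightarrow> f \<in> tens (n + n)"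
  using tprod_Lsym_tens unfolding D2_def by auto

lemma D2_weight:
  assumes f: "f \<in> D2 n" and nz: "f x \<noteq> 0"
  shows "length x = n + n \<and> cnt x = n"
proof -
  have "tact (gt \<theta>) f = f" for \<theta> using f gt_SU2 by (simp add: D2_def)
  then have "2 * cnt x = length x" using weight nz by metis
  moreover have "length x = n + n" using D2_tens[OF f] nz by (auto simp: tens_def)
  ultimately show ?thesis by simp
qed



lemma tprod_sym1:
  assumes f: "f \<in> tprod n (Lsym n) B" and l: "length u = n" "length u' = n" "cnt u = cnt u'"
  shows "f (u @ v) = f (u' @ v)"
proof -
  have "f \<in> V.span {tp n a b |a b. a \<in> Lsym n \<and> b \<in> B}" using f by (simp add: tprod_tp)
  then show ?thesis
  proof (rule V.span_induct)
    show "V.subspace {f. f (u @ v) = f (u' @ v)}"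
      unfolding V.subspace_def by (simp add: cscale_apply)
    fix x assume "x \<in> {tp n a b |a b. a \<in> Lsym n \<and> b \<in> B}"
    then obtain a b where x: "x = tp n a b" and a: "a \<in> Lsym n" by auto
    show "x (u @ v) = x (u' @ v)" using Lsym_D(2)[OF a l] l unfolding x by (simp add: tp_apply)
  qed
qed

lemma cnt_full: "cnt v = length v \<Longrightarrow> v = replicate (length v) True"
proof (induction v)
  case (Cons a v)
  then show ?case
  proof (cases a)
    case False
    then show ?thesis using Cons.prems cnt_le[of v] by simp
  qed simp
qed simp

lemma D2_unique:
  assumes f: "f \<in> D2 n" and z: "f (pt n) = 0"
  shows "f = 0"
proof -
  have ftens: "f \<in> tens (n + n)" using f by (rule D2_tens)
  have inv: "\<And>g. g \<in> SU2 \<Longrightarrow> tact g f = f" using f by (simp add: D2_def)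
  have wt: "\<And>x. f x \<noteq> 0 \<Longrightarrow> length x = n + n \<and> cnt x = n" using D2_weight[OF f] by blast
  have ft: "f \<in> tprod n (Lsym n) (Lsym n)" using f by (simp add: D2_def)
  have sym: "\<And>u u' v. length u = n \<Longrightarrow> length u' = n \<Longrightarrow> cnt u = cnt u' \<Longrightarrow> f (u @ v) = f (u' @ v)"
    using tprod_sym1[OF ft] by blast
  define h where "h v = (\<Sum>u\<in>LN n. f (u @ v))" for v
  have F0: "f (replicate n False @ v) = 0" if lv: "length v = n" for v
  proof (rule ccontr)
    assume "f (replicate n False @ v) \<noteq> 0"
    then have "cnt v = n" using wt by fastforce
    then have "v = replicate n True" using cnt_full[of v] lv by simp
    then show False using z \<open>f (replicate n False @ v) \<noteq> 0\<close> by (simp add: pt_def)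
  qed
  have A: "tact g0 h = 0"
  proof
    fix v
    show "tact g0 h v = 0 v"
    proof (cases "length v = n")
      case True
      have lF: "length (replicate n False) = n" by simp
      have P: "(\<Prod>k<n. g0 (replicate n False ! k) (u ! k)) = rr ^ n" for u
        by (simp add: g0_def)
      have "0 = f (replicate n False @ v)" using F0 True by simp
      also have "\<dots> = tact g0 f (replicate n False @ v)" using inv[OF g0_SU2] by simp
      also have "\<dots> = (\<Sum>u\<in>LN n. \<Sum>v'\<in>LN n. (rr ^ n * (\<Prod>k<n. g0 (v ! k) (v' ! k))) * f (u @ v'))"
        unfolding tact_split[OF lF True] P ..
      also have "\<dots> = rr ^ n * (\<Sum>v'\<in>LN n. (\<Prod>k<n. g0 (v ! k) (v' ! k)) * h v')"
        unfolding h_def by (subst sum.swap) (simp add: sum_distrib_left mult.assoc)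
      also have "\<dots> = rr ^ n * tact g0 h v" unfolding tact_LN True ..
      finally have "rr ^ n * tact g0 h v = 0" by simp
      then show ?thesis using rr_nz by simp
    next
      case False
      have "h y = 0" if "length y = length v" for y
        unfolding h_def
      proof (intro sum.neutral ballI)
        fix u assume "u \<in> LN n"
        then have "length (u @ y) \<noteq> n + n" using False that by (simp add: LN_def)
        then show "f (u @ y) = 0" using ftens by (simp add: tens_def)
      qed
      then show ?thesis by (simp add: tact_zero_len)
    qed
  qed
  then have h0: "h = 0" by (rule tact_g0_inj)
  have B: "f (u0 @ v) = 0" if lu: "length u0 = n" for u0 v
  proof (rule ccontr)
    assume nz: "f (u0 @ v) \<noteq> 0"
    then have w: "cnt u0 + cnt v = n" using wt by fastforce
    define S where "S = {u \<in> LN n. cnt u = cnt u0}"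
    have "0 = h v" using h0 by simp
    also have "\<dots> = (\<Sum>u\<in>LN n. if cnt u = cnt u0 then f (u0 @ v) else 0)"
      unfolding h_def
    proof (intro sum.cong refl)
      fix u assume u: "u \<in> LN n"
      show "f (u @ v) = (if cnt u = cnt u0 then f (u0 @ v) else 0)"
      proof (cases "cnt u = cnt u0")
        case True then show ?thesis using sym[of u u0 v] u lu by (simp add: LN_def)
      next
        case False
        have "f (u @ v) = 0"
        proof (rule ccontr)
          assume "f (u @ v) \<noteq> 0"
          then have "cnt u + cnt v = n" using wt by fastforce
          then show False using w False by simp
        qed
        then show ?thesis using False by simp
      qed
    qed
    also have "\<dots> = (\<Sum>u\<in>S. f (u0 @ v))"
      unfolding S_def by (rule sum.inter_filter[symmetric]) simp
    also have "\<dots> = of_nat (card S) * f (u0 @ v)" by simp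
    finally have "of_nat (card S) * f (u0 @ v) = 0" by simp
    moreover have "card S \<noteq> 0"
    proof -
      have "u0 \<in> S" using lu by (auto simp: S_def LN_def)
      moreover have "finite S" unfolding S_def by simp
      ultimately show ?thesis by (auto simp: card_0_eq)
    qed
    ultimately show False using nz by simp
  qed
  show "f = 0"
  proof
    fix x :: "bool list"
    show "f x = 0 x"
    proof (cases "length x < n")
      case True
      then show ?thesis using ftens by (simp add: tens_def)
    next
      case False
      then have "x = take n x @ drop n x" "length (take n x) = n" by auto
      then show ?thesis using B by (metis zero_fun_apply)
    qed
  qed
qed

lemma D2_span: "D2 n = V.span {om n}"
proof
  show "V.span {om n} \<subseteq> D2 n"
    using om_D2 subspace_D2 by (intro V.span_minimal) auto
  show "D2 n \<subseteq> V.span {om n}"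
  proof
    fix f assume f: "f \<in> D2 n"
    define c where "c = f (pt n) / om n (pt n)"
    define f' where "f' = f + cscale (- c) (om n)"
    have "f' \<in> D2 n" unfolding f'_def
      using f om_D2 subspace_D2 unfolding V.subspace_def by blast
    moreover have "f' (pt n) = 0" unfolding f'_def c_def using om_pt_nz by (simp add: cscale_apply)
    ultimately have "f' = 0" by (rule D2_unique)
    then have "f = cscale c (om n)" unfolding f'_def by (simp add: fun_eq_iff cscale_apply)
    then show "f \<in> V.span {om n}" by (simp add: V.span_scale V.span_base)
  qed
qed



definition gen :: "nat \<Rightarrow> nat list \<Rightarrow> nat list \<Rightarrow> bool list \<Rightarrow> complex" where
  "gen n w1 w2 = tp (n * length w1) (ev n w1) (tp (2 * n) (om n) (ev n w2))"

definition IX :: "nat \<Rightarrow> nat \<Rightarrow> (nat list \<times> nat list) set" where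
  "IX n m = {(w1, w2). set w1 \<subseteq> {..n} \<and> set w2 \<subseteq> {..n} \<and> length w1 + length w2 + 2 = m}"

definition G :: "nat \<Rightarrow> nat \<Rightarrow> (bool list \<Rightarrow> complex) set" where
  "G n m = (\<lambda>(w1, w2). gen n w1 w2) ` IX n m"

lemma finite_IX: "finite (IX n m)"
proof -
  have "IX n m \<subseteq> (\<Union>k\<le>m. Wd n k) \<times> (\<Union>k\<le>m. Wd n k)"
    by (auto simp: IX_def Wd_def)
  then show ?thesis by (rule finite_subset) auto
qed

lemma finite_G: "finite (G n m)" by (simp add: G_def finite_IX)

lemma G_small: "m < 2 \<Longrightarrow> G n m = {}" by (auto simp: G_def IX_def)

lemma ev_single: "a \<le> n \<Longrightarrow> ev n [a] = sv n a"
  using tp_unit_right[OF sv_tens] by simp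

lemma ev_snoc: "tp (n * length w) (ev n w) (sv n a) = ev n (w @ [a])"
proof (induction w)
  case Nil
  then show ?case using tp_unit_right[OF sv_tens] by simp
next
  case (Cons c w)
  have "tp (n * length (c # w)) (ev n (c # w)) (sv n a) = tp (n + n * length w) (tp n (sv n c) (ev n w)) (sv n a)"
    by simp
  also have "\<dots> = tp n (sv n c) (tp (n * length w) (ev n w) (sv n a))" by (rule tp_assoc[symmetric])
  also have "\<dots> = ev n ((c # w) @ [a])" using Cons by simp
  finally show ?case .
qed

lemma gen_snoc: "tp (n * (length w1 + length w2 + 2)) (gen n w1 w2) (sv n a) = gen n w1 (w2 @ [a])"
proof -
  have eq: "n * (length w1 + length w2 + 2) = n * length w1 + (2 * n + n * length w2)"
    by (simp add: algebra_simps)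
  have "tp (n * (length w1 + length w2 + 2)) (gen n w1 w2) (sv n a) =
     tp (n * length w1 + (2 * n + n * length w2)) (tp (n * length w1) (ev n w1) (tp (2 * n) (om n) (ev n w2))) (sv n a)"
    unfolding eq gen_def ..
  also have "\<dots> = tp (n * length w1) (ev n w1) (tp (2 * n + n * length w2) (tp (2 * n) (om n) (ev n w2)) (sv n a))"
    by (rule tp_assoc[symmetric])
  also have "\<dots> = tp (n * length w1) (ev n w1) (tp (2 * n) (om n) (tp (n * length w2) (ev n w2) (sv n a)))"
    by (simp add: tp_assoc)
  also have "\<dots> = gen n w1 (w2 @ [a])" by (simp add: gen_def ev_snoc)
  finally show ?thesis .
qed

lemma Lsym_span_Wd1: "V.span (ev n ` Wd n (Suc 0)) = Lsym n"
proof -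
  have "ev n ` Wd n (Suc 0) = sv n ` {..n}"
  proof
    show "ev n ` Wd n (Suc 0) \<subseteq> sv n ` {..n}"
      by (auto simp: Wd_def length_Suc_conv tp_unit_right[OF sv_tens])
    show "sv n ` {..n} \<subseteq> ev n ` Wd n (Suc 0)"
    proof
      fix x assume "x \<in> sv n ` {..n}"
      then obtain a where a: "a \<le> n" "x = sv n a" by auto
        then have "x = ev n [a]" "[a] \<in> Wd n (Suc 0)" by (auto simp: tp_unit_right[OF sv_tens] Wd_def)
      then show "x \<in> ev n ` Wd n (Suc 0)" by blast
    qed
  qed
  then show ?thesis by (simp add: Lsym_span)
qed

lemma om_span: "om n \<in> V.span {tp n (sv n a) (sv n b) | a b. a \<le> n \<and> b \<le> n}"
proof -
  have "om n \<in> tprod n (Lsym n) (Lsym n)" using om_D2 by (simp add: D2_def)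
  also have "tprod n (Lsym n) (Lsym n) = V.span {tp n a b |a b. a \<in> sv n ` {..n} \<and> b \<in> sv n ` {..n}}"
    unfolding Lsym_span by (rule tprod_span)
  also have "{tp n a b |a b. a \<in> sv n ` {..n} \<and> b \<in> sv n ` {..n}} = {tp n (sv n a) (sv n b) | a b. a \<le> n \<and> b \<le> n}"
    by auto
  finally show ?thesis .
qed

lemma subspace_span_ev: "V.subspace (V.span (ev n ` Wd n m))" by (rule V.subspace_span)

lemma gen_in_span:
  assumes "(w1, w2) \<in> IX n m"
  shows "gen n w1 w2 \<in> V.span (ev n ` Wd n m)"
proof -
  have w: "set w1 \<subseteq> {..n}" "set w2 \<subseteq> {..n}" "length w1 + length w2 + 2 = m" using assms by (auto simp: IX_def)
  define F where "F x = tp (n * length w1) (ev n w1) (tp (2 * n) x (ev n w2))" for x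
  have lin: "lin F" unfolding F_def lin_def
    by (auto simp: tp_def fun_eq_iff algebra_simps cscale_apply)
  have "F (om n) \<in> V.span (ev n ` Wd n m)"
  proof (rule span_lin[OF lin om_span _ V.subspace_span])
    fix s assume "s \<in> {tp n (sv n a) (sv n b) | a b. a \<le> n \<and> b \<le> n}"
    then obtain a b where s: "s = tp n (sv n a) (sv n b)" "a \<le> n" "b \<le> n" by auto
    have "F s = tp (n * length w1) (ev n w1) (tp n (sv n a) (tp n (sv n b) (ev n w2)))"
      unfolding F_def s by (simp add: tp_assoc mult_2)
    also have "\<dots> = ev n (w1 @ [a, b] @ w2)"
    proof -
      have "ev n (w1 @ v) = tp (n * length w1) (ev n w1) (ev n v)" for v
        by (induction w1) (simp_all add: tp_assoc)
      then show ?thesis by simp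
    qed
    finally show "F s \<in> V.span (ev n ` Wd n m)"
      using w s by (intro V.span_base) (auto simp: Wd_def)
  qed
  then show ?thesis by (simp add: F_def gen_def)
qed

lemma G_in_span: "G n m \<subseteq> V.span (ev n ` Wd n m)"
  using gen_in_span by (auto simp: G_def)

lemma Espace_char:
  "Espace n m = {f \<in> V.span (ev n ` Wd n m). \<forall>g\<in>G n m. cinner (n * m) f g = 0}"
proof (cases "m < 2")
  case True
  then have G: "G n m = {}" by (rule G_small)
  show ?thesis
  proof (cases "m = 0")
    case True then show ?thesis using G by (simp add: Espace_def)
  next
    case False
    then have "m = 1" using \<open>m < 2\<close> by simp
    then show ?thesis using G by (simp add: Espace_def Lsym_span_Wd1)
  qed
next
  case False
  define T where "T i = tprod (n * (i - 1)) (Lpow n (i - 1)) (tprod (2 * n) (D2 n) (Lpow n (m - i - 1)))" for i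
  define S where "S = V.span (\<Union>i\<in>{1..m - 1}. T i)"
  have E: "Espace n m = {f \<in> V.span (ev n ` Wd n m). \<forall>h\<in>S. cinner (n * m) f h = 0}"
    using False by (simp add: Espace_def S_def T_def Lpow_span Let_def)
  have Ti: "T i = V.span {gen n w1 w2 | w1 w2. w1 \<in> Wd n (i - 1) \<and> w2 \<in> Wd n (m - i - 1)}" for i
  proof -
    have "T i = tprod (n * (i - 1)) (V.span (ev n ` Wd n (i - 1)))
        (V.span {tp (2 * n) a b | a b. a \<in> {om n} \<and> b \<in> ev n ` Wd n (m - i - 1)})"
      unfolding T_def Lpow_span D2_span tprod_span ..
    also have "\<dots> = V.span {tp (n * (i - 1)) a b | a b. a \<in> ev n ` Wd n (i - 1) \<and>
         b \<in> {tp (2 * n) a b | a b. a \<in> {om n} \<and> b \<in> ev n ` Wd n (m - i - 1)}}"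
      by (rule tprod_span)
    also have "{tp (n * (i - 1)) a b | a b. a \<in> ev n ` Wd n (i - 1) \<and>
         b \<in> {tp (2 * n) a b | a b. a \<in> {om n} \<and> b \<in> ev n ` Wd n (m - i - 1)}} =
       {gen n w1 w2 | w1 w2. w1 \<in> Wd n (i - 1) \<and> w2 \<in> Wd n (m - i - 1)}"
    proof (rule set_eqI, rule iffI)
      fix x assume "x \<in> {tp (n * (i - 1)) a b | a b. a \<in> ev n ` Wd n (i - 1) \<and>
         b \<in> {tp (2 * n) a b | a b. a \<in> {om n} \<and> b \<in> ev n ` Wd n (m - i - 1)}}"
      then obtain w1 w2 where w: "w1 \<in> Wd n (i - 1)" "w2 \<in> Wd n (m - i - 1)"
        "x = tp (n * (i - 1)) (ev n w1) (tp (2 * n) (om n) (ev n w2))" by blast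
      then have "x = gen n w1 w2" by (simp add: gen_def Wd_def)
      then show "x \<in> {gen n w1 w2 | w1 w2. w1 \<in> Wd n (i - 1) \<and> w2 \<in> Wd n (m - i - 1)}" using w by blast
    next
      fix x assume "x \<in> {gen n w1 w2 | w1 w2. w1 \<in> Wd n (i - 1) \<and> w2 \<in> Wd n (m - i - 1)}"
      then obtain w1 w2 where w: "w1 \<in> Wd n (i - 1)" "w2 \<in> Wd n (m - i - 1)"
        "x = gen n w1 w2" by blast
      then have "x = tp (n * (i - 1)) (ev n w1) (tp (2 * n) (om n) (ev n w2))" by (simp add: gen_def Wd_def)
      then show "x \<in> {tp (n * (i - 1)) a b | a b. a \<in> ev n ` Wd n (i - 1) \<and>
         b \<in> {tp (2 * n) a b | a b. a \<in> {om n} \<and> b \<in> ev n ` Wd n (m - i - 1)}}" using w by blast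
    qed
    finally show ?thesis .
  qed
  have GS: "G n m \<subseteq> S"
  proof
    fix g assume "g \<in> G n m"
    then obtain w1 w2 where g: "g = gen n w1 w2" "(w1, w2) \<in> IX n m" by (auto simp: G_def)
    define i where "i = length w1 + 1"
    have i: "i \<in> {1..m - 1}" "i - 1 = length w1" "m - i - 1 = length w2"
      using g(2) by (auto simp: i_def IX_def)
    have "g \<in> T i" unfolding Ti g(1)
      by (rule V.span_base) (use g(2) i in \<open>auto simp: IX_def Wd_def\<close>)
    then have "g \<in> (\<Union>i\<in>{1..m - 1}. T i)" using i(1) by blast
    then show "g \<in> S" unfolding S_def by (rule V.span_base)
  qed
  have SG: "S \<subseteq> V.span (G n m)"
  proof -
    have "T i \<subseteq> V.span (G n m)" if "i \<in> {1..m - 1}" for i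
      unfolding Ti
    proof (rule V.span_mono[THEN subset_trans, OF _ eq_refl])
      show "{gen n w1 w2 |w1 w2. w1 \<in> Wd n (i - 1) \<and> w2 \<in> Wd n (m - i - 1)} \<subseteq> G n m"
        using that by (auto simp: G_def IX_def Wd_def)
    qed simp
    then have "(\<Union>i\<in>{1..m - 1}. T i) \<subseteq> V.span (G n m)" by blast
    then show ?thesis unfolding S_def by (simp add: V.span_minimal)
  qed
  show ?thesis unfolding E
  proof (intro Collect_cong conj_cong refl iffI ballI)
    fix f h assume "\<forall>h\<in>S. cinner (n * m) f h = 0" "h \<in> G n m"
    then show "cinner (n * m) f h = 0" using GS by blast
  next
    fix f h assume a: "\<forall>h\<in>G n m. cinner (n * m) f h = 0" and h: "h \<in> S"
    show "cinner (n * m) f h = 0"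
      by (rule orth_span_right[of "G n m"]) (use a h SG in auto)
  qed
qed



lemma cinner_diff_left: "cinner N (f - g) h = cinner N f h - cinner N g h"
  by (simp add: cinner_def sum_subtractf algebra_simps)
lemma cinner_diff_right: "cinner N f (g - h) = cinner N f g - cinner N f h"
  by (simp add: cinner_def sum_subtractf algebra_simps)
lemma cinner_zero_left[simp]: "cinner N 0 h = 0" by (simp add: cinner_def)
lemma cinner_zero_right[simp]: "cinner N f 0 = 0" by (simp add: cinner_def)

lemma basis_fin:
  assumes "V \<subseteq> V.span W" "finite W"
  obtains B where "B \<subseteq> V" "V.independent B" "V \<subseteq> V.span B" "card B = V.dim V" "finite B"
proof -
  obtain B where B: "B \<subseteq> V" "V.independent B" "V \<subseteq> V.span B" "card B = V.dim V"
    by (rule V.basis_exists)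
  have "finite B" using V.independent_span_bound[OF assms(2) B(2)] B(1) assms(1) by auto
  then show ?thesis using B that by blast
qed

lemma dim_ge_indep:
  assumes "V \<subseteq> V.span W" "finite W" "X \<subseteq> V" "V.independent X"
  shows "card X \<le> V.dim V"
proof -
  obtain B where B: "B \<subseteq> V" "V.independent B" "V \<subseteq> V.span B" "card B = V.dim V" "finite B"
    using basis_fin[OF assms(1,2)] by blast
  have "card X \<le> card B" using V.independent_span_bound[OF B(5) assms(4)] assms(3) B(3) by auto
  then show ?thesis using B(4) by simp
qed

lemma dim_mono_fin:
  assumes "A \<subseteq> B" "B \<subseteq> V.span W" "finite W"
  shows "V.dim A \<le> V.dim B"
proof -
  obtain BA where BA: "BA \<subseteq> A" "V.independent BA" "A \<subseteq> V.span BA" "card BA = V.dim A"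
    by (rule V.basis_exists)
  have "BA \<subseteq> B" using BA(1) assms(1) by auto
  then have "card BA \<le> V.dim B" using dim_ge_indep[OF assms(2,3) _ BA(2)] by blast
  then show ?thesis using BA(4) by simp
qed

lemma proj_exists:
  assumes "finite Y" "Y \<subseteq> tens N" "q \<in> tens N"
  shows "\<exists>s\<in>V.span Y. \<forall>y\<in>Y. cinner N (q - s) y = 0"
  using assms
proof (induction Y arbitrary: q rule: finite_induct)
  case empty
  then show ?case by (auto intro: V.span_zero)
next
  case (insert y Y)
  have YT: "Y \<subseteq> tens N" and yT: "y \<in> tens N" using insert.prems by auto
  obtain s where s: "s \<in> V.span Y" "\<forall>z\<in>Y. cinner N (q - s) z = 0"
    using insert.IH[OF YT insert.prems(2)] by blast
  obtain t where t: "t \<in> V.span Y" "\<forall>z\<in>Y. cinner N (y - t) z = 0"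
    using insert.IH[OF YT yT] by blast
  have spY: "V.span Y \<subseteq> V.span (insert y Y)" by (rule V.span_mono) auto
  have tT: "t \<in> tens N" using span_tens[OF YT] t(1) by auto
  define y' where "y' = y - t"
  have y'T: "y' \<in> tens N" unfolding y'_def using yT tT subspace_tens
    by (simp add: V.subspace_diff)
  show ?case
  proof (cases "cinner N y' y' = 0")
    case True
    then have "y' = 0" using cinner_self_zero[OF y'T] by simp
    then have "y = t" unfolding y'_def by simp
    then have "cinner N (q - s) y = 0" using orth_span_right[of Y N "q - s" t] s(2) t(1) by simp
    then show ?thesis using s spY by blast
  next
    case False
    define \<alpha> where "\<alpha> = cinner N (q - s) y' / cinner N y' y'"
    define s' where "s' = s + cscale \<alpha> y'"
    have "y \<in> V.span (insert y Y)" by (rule V.span_base) simp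
    moreover have "t \<in> V.span (insert y Y)" using spY t(1) by auto
    ultimately have "y' \<in> V.span (insert y Y)" unfolding y'_def by (rule V.span_diff)
    then have s'sp: "s' \<in> V.span (insert y Y)" unfolding s'_def
      using spY s(1) by (intro V.span_add V.span_scale) auto
    have qs': "q - s' = (q - s) - cscale \<alpha> y'" unfolding s'_def by simp
    have oY: "\<forall>z\<in>Y. cinner N (q - s') z = 0"
      using s(2) t(2) by (simp add: qs' cinner_diff_left cinner_scale_left y'_def)
    have "cinner N (q - s') t = 0" using orth_span_right[of Y N "q - s'" t] oY t(1) by simp
    moreover have "cinner N (q - s') y' = 0"
      unfolding qs' cinner_diff_left cinner_scale_left \<alpha>_def using False by simp
    moreover have "y = y' + t" unfolding y'_def by simp
    ultimately have "cinner N (q - s') y = 0" by (simp add: cinner_add_right)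
    then show ?thesis using oY s'sp by blast
  qed
qed

lemma subspace_orth:
  assumes "V.subspace U"
  shows "V.subspace {f \<in> U. \<forall>y\<in>Y. cinner N f y = 0}"
  using assms unfolding V.subspace_def by (auto simp: cinner_add_left cinner_scale_left)

lemma dim_constraint1:
  assumes U: "V.subspace U" "U \<subseteq> V.span W" "finite W"
  shows "V.dim U \<le> V.dim {f \<in> U. cinner N f y = 0} + 1"
proof (cases "\<forall>u\<in>U. cinner N u y = 0")
  case True
  then have "{f \<in> U. cinner N f y = 0} = U" by auto
  then show ?thesis by simp
next
  case False
  then obtain u0 where u0: "u0 \<in> U" "cinner N u0 y \<noteq> 0" by auto
  define K where "K = {f \<in> U. cinner N f y = 0}"
  obtain BK where BK: "BK \<subseteq> K" "V.independent BK" "K \<subseteq> V.span BK" "card BK = V.dim K" "finite BK"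
    using basis_fin[of K W] U(2,3) by (auto simp: K_def)
  have "U \<subseteq> V.span (insert u0 BK)"
  proof
    fix u assume u: "u \<in> U"
    define c where "c = cinner N u y / cinner N u0 y"
    have "u - cscale c u0 \<in> U" using u u0(1) U(1)
      by (simp add: V.subspace_diff V.subspace_scale)
    moreover have "cinner N (u - cscale c u0) y = 0"
      using u0(2) by (simp add: cinner_diff_left cinner_scale_left c_def)
    ultimately have "u - cscale c u0 \<in> V.span BK" using BK(3) by (auto simp: K_def)
    then have "u - cscale c u0 \<in> V.span (insert u0 BK)" using V.span_mono[of BK "insert u0 BK"] by auto
    moreover have "cscale c u0 \<in> V.span (insert u0 BK)" by (intro V.span_scale V.span_base) simp
    ultimately have "(u - cscale c u0) + cscale c u0 \<in> V.span (insert u0 BK)" by (rule V.span_add)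
    then show "u \<in> V.span (insert u0 BK)" by simp
  qed
  then have "V.dim U \<le> card (insert u0 BK)" using BK(5) by (intro V.dim_le_card) auto
  also have "\<dots> \<le> card BK + 1" using BK(5) by (simp add: card_insert_if)
  finally show ?thesis using BK(4) by (simp add: K_def)
qed

lemma dim_constraints:
  assumes Y: "finite Y" and U: "V.subspace U" "U \<subseteq> V.span W" "finite W"
  shows "V.dim U \<le> V.dim {f \<in> U. \<forall>y\<in>Y. cinner N f y = 0} + card Y"
  using Y
proof (induction Y rule: finite_induct)
  case empty
  then show ?case by simp
next
  case (insert y Y)
  define UY where "UY = {f \<in> U. \<forall>y\<in>Y. cinner N f y = 0}"
  have "V.subspace UY" unfolding UY_def by (rule subspace_orth[OF U(1)])
  moreover have "UY \<subseteq> V.span W" using U(2) by (auto simp: UY_def)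
  ultimately have "V.dim UY \<le> V.dim {f \<in> UY. cinner N f y = 0} + 1"
    using U(3) by (rule dim_constraint1)
  moreover have "{f \<in> UY. cinner N f y = 0} = {f \<in> U. \<forall>y\<in>insert y Y. cinner N f y = 0}"
    by (auto simp: UY_def)
  ultimately show ?case using insert by (simp add: UY_def)
qed

lemma ub_general:
  assumes W: "finite W" "W \<subseteq> tens N"
    and Gs: "Gs \<subseteq> V.span W"
    and Z: "Z \<subseteq> V.span Gs" "V.independent Z"
  shows "V.dim {f \<in> V.span W. \<forall>g\<in>Gs. cinner N f g = 0} + card Z \<le> card W"
proof -
  define E where "E = {f \<in> V.span W. \<forall>g\<in>Gs. cinner N f g = 0}"
  have PT: "V.span W \<subseteq> tens N" using span_tens[OF W(2)] .
  have Esub: "V.subspace E" unfolding E_def by (rule subspace_orth[OF V.subspace_span])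
  obtain B where B: "B \<subseteq> E" "V.independent B" "E \<subseteq> V.span B" "card B = V.dim E" "finite B"
    using basis_fin[of E W] W(1) by (auto simp: E_def)
  have ZP: "Z \<subseteq> V.span W" using Z(1) Gs V.span_minimal[OF Gs V.subspace_span] by auto
  have Zfin: "finite Z" using V.independent_span_bound[OF W(1) Z(2) ZP] by simp
  have orthE: "cinner N e h = 0" if "e \<in> E" "h \<in> V.span Gs" for e h
    using that orth_span_right[of Gs N e h] by (auto simp: E_def)
  have zero: "x = 0" if "x \<in> E" "x \<in> V.span Gs" for x
  proof -
    have "cinner N x x = 0" using orthE that by blast
    moreover have "x \<in> tens N" using that(1) PT by (auto simp: E_def)
    ultimately show ?thesis using cinner_self_zero by blast
  qed
  have disj: "B \<inter> Z = {}"
  proof (rule ccontr)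
    assume "B \<inter> Z \<noteq> {}"
    then obtain x where x: "x \<in> B" "x \<in> Z" by auto
    then have "x = 0" using zero B(1) Z(1) by auto
    then show False using x(1) B(2) V.dependent_zero by blast
  qed
  have spB: "V.span B \<subseteq> E" using B(1) Esub by (rule V.span_minimal)
  have ind: "V.independent (B \<union> Z)"
  proof (rule V.independent_if_scalars_zero)
    show "finite (B \<union> Z)" using B(5) Zfin by simp
    fix f x assume s: "(\<Sum>x\<in>B \<union> Z. cscale (f x) x) = 0" and x: "x \<in> B \<union> Z"
    define eb where "eb = (\<Sum>x\<in>B. cscale (f x) x)"
    define ez where "ez = (\<Sum>x\<in>Z. cscale (f x) x)"
    have "eb + ez = 0" using s unfolding eb_def ez_def
      by (subst (asm) sum.union_disjoint) (use B(5) Zfin disj in auto)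
    then have ebz: "eb = - ez" by (simp add: eq_neg_iff_add_eq_0)
    have "eb \<in> V.span B" unfolding eb_def by (intro V.span_sum V.span_scale V.span_base)
    then have "eb \<in> E" using spB by auto
    moreover have "eb \<in> V.span Gs" unfolding ebz ez_def using Z(1)
      by (intro V.span_neg V.span_sum V.span_scale) auto
    ultimately have eb0: "eb = 0" by (rule zero)
    then have ez0: "ez = 0" using ebz by simp
    show "f x = 0"
    proof (cases "x \<in> B")
      case True
      then show ?thesis using B(2) B(5) eb0 unfolding eb_def V.independent_explicit_finite_subsets by blast
    next
      case False
      then have "x \<in> Z" using x by simp
      then show ?thesis using Z(2) Zfin ez0 unfolding ez_def V.independent_explicit_finite_subsets by blast
    qed
  qed
  have "B \<union> Z \<subseteq> V.span W" using B(1) ZP by (auto simp: E_def)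
  then have "card (B \<union> Z) \<le> card W" using V.independent_span_bound[OF W(1) ind] by simp
  moreover have "card (B \<union> Z) = card B + card Z" using B(5) Zfin disj by (simp add: card_Un_disjoint)
  ultimately show ?thesis using B(4) by (simp add: E_def)
qed



lemma ev_indep: "V.independent (ev n ` Wd n m) \<and> inj_on (ev n) (Wd n m)"
proof (rule tri_indep[where p="rep n" and key="\<lambda>_. 0"])
  show "finite (Wd n m)" by simp
  fix i assume "i \<in> Wd n m"
  then show "ev n i (rep n i) \<noteq> 0" by (simp add: ev_rep Wd_def)
next
  fix i j assume "i \<in> Wd n m" "j \<in> Wd n m" "i \<noteq> j" "ev n j (rep n i) \<noteq> 0"
  then show "(0::nat) < 0" by (simp add: ev_rep Wd_def)
qed

lemma card_ev: "card (ev n ` Wd n m) = (n + 1) ^ m"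
  using ev_indep by (simp add: card_image card_Wd)

lemma ev_tens_Wd: "ev n ` Wd n m \<subseteq> tens (n * m)"
  using ev_tens by (auto simp: Wd_def)

lemma dim_P: "V.dim (V.span (ev n ` Wd n m)) = (n + 1) ^ m"
proof -
  have "V.dim (V.span (ev n ` Wd n m)) = card (ev n ` Wd n m)"
    using ev_indep V.dim_span_eq_card_independent by blast
  then show ?thesis using card_ev by simp
qed

fun keyv :: "nat \<Rightarrow> nat list \<Rightarrow> nat" where
  "keyv K [] = 0"
| "keyv K (a # w) = a * K ^ length w + keyv K w"

lemma keyv_append: "keyv K (u @ v) = keyv K u * K ^ length v + keyv K v"
  by (induction u) (simp_all add: algebra_simps power_add)

definition hasp :: "nat \<Rightarrow> nat list \<Rightarrow> bool" where
  "hasp n w \<longleftrightarrow> (\<exists>w1 w2. w = w1 @ [0, n] @ w2)"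

definition Aw :: "nat \<Rightarrow> nat \<Rightarrow> nat list set" where "Aw n m = {w \<in> Wd n m. \<not> hasp n w}"
definition Bw :: "nat \<Rightarrow> nat \<Rightarrow> nat list set" where "Bw n m = {w \<in> Wd n m. hasp n w}"

definition sp :: "nat \<Rightarrow> nat list \<Rightarrow> nat list \<times> nat list" where
  "sp n w = (SOME p. w = fst p @ [0, n] @ snd p)"

lemma sp_eq: "hasp n w \<Longrightarrow> w = fst (sp n w) @ [0, n] @ snd (sp n w)"
  unfolding sp_def hasp_def by (rule someI_ex) auto

definition zv :: "nat \<Rightarrow> nat list \<Rightarrow> bool list \<Rightarrow> complex" where
  "zv n w = gen n (fst (sp n w)) (snd (sp n w))"

lemma rep_len': "set w \<subseteq> {..n} \<Longrightarrow> length (rep n w) = n * length w" by (rule rep_len)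

lemma gen_rep:
  assumes x1: "set x1 \<subseteq> {..n}" "length x1 = length w1" and ab: "a \<le> n" "b \<le> n"
    and x2: "set x2 \<subseteq> {..n}" "length x2 = length w2"
  shows "gen n w1 w2 (rep n (x1 @ [a, b] @ x2)) = ev n w1 (rep n x1) * om n (repc n a @ repc n b) * ev n w2 (rep n x2)"
proof -
  have l1: "length (rep n x1) = n * length w1" using x1 rep_len by metis
  have l2: "length (repc n a @ repc n b) = 2 * n" using ab by simp
  have "rep n (x1 @ [a, b] @ x2) = rep n x1 @ ((repc n a @ repc n b) @ rep n x2)" by simp
  then show ?thesis unfolding gen_def by (simp only: tp_apply[OF l1] tp_apply[OF l2] mult.assoc)
qed

lemma gen_rep_nz:
  assumes w: "set w1 \<subseteq> {..n}" "set w2 \<subseteq> {..n}" and w': "w' \<in> Wd n (length w1 + length w2 + 2)"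
    and nz: "gen n w1 w2 (rep n w') \<noteq> 0"
  shows "\<exists>a b. w' = w1 @ [a, b] @ w2 \<and> a \<le> n \<and> b \<le> n \<and> om n (repc n a @ repc n b) \<noteq> 0"
proof -
  define x1 where "x1 = take (length w1) w'"
  define r where "r = drop (length w1) w'"
  have lr: "length r = length w2 + 2" using w' by (simp add: r_def Wd_def)
  then obtain a b x2 where r: "r = a # b # x2" by (cases r rule: remdups_adj.cases) auto
  have "w' = x1 @ r" unfolding x1_def r_def by simp
  then have w'eq: "w' = x1 @ [a, b] @ x2" using r by simp
  have sw': "set w' \<subseteq> {..n}" using w' by (simp add: Wd_def)
  then have sx: "set x1 \<subseteq> {..n}" "a \<le> n" "b \<le> n" "set x2 \<subseteq> {..n}" using w'eq by auto
  have lx: "length x1 = length w1" "length x2 = length w2" using w' lr r by (auto simp: x1_def Wd_def)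
  have "ev n w1 (rep n x1) * om n (repc n a @ repc n b) * ev n w2 (rep n x2) \<noteq> 0"
    using nz gen_rep[OF sx(1) lx(1) sx(2,3) sx(4) lx(2)] w'eq by simp
  then have "w1 = x1" "w2 = x2" "om n (repc n a @ repc n b) \<noteq> 0"
    using ev_rep[OF sx(1), of w1] ev_rep[OF sx(4), of w2] lx by (auto split: if_splits)
  then show ?thesis using w'eq sx by blast
qed

lemma repc_pt: "repc n 0 @ repc n n = pt n" by (simp add: repc_def pt_def)

lemma zv_indep:
  assumes n: "n \<ge> 1"
  shows "V.independent (zv n ` Bw n m) \<and> inj_on (zv n) (Bw n m)"
proof (rule tri_indep[where p="rep n" and key="keyv (n + 1)"])
  show "finite (Bw n m)" by (simp add: Bw_def)
next
  fix w assume w: "w \<in> Bw n m"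
  define w1 where "w1 = fst (sp n w)"
  define w2 where "w2 = snd (sp n w)"
  have weq: "w = w1 @ [0, n] @ w2" using sp_eq w by (simp add: Bw_def w1_def w2_def)
  have s: "set w1 \<subseteq> {..n}" "set w2 \<subseteq> {..n}" using w weq by (auto simp: Bw_def Wd_def)
  have z: "zv n w = gen n w1 w2" by (simp add: zv_def w1_def w2_def)
  have "zv n w (rep n w) = gen n w1 w2 (rep n (w1 @ [0, n] @ w2))" using z weq by simp
  also have "\<dots> = ev n w1 (rep n w1) * om n (repc n 0 @ repc n n) * ev n w2 (rep n w2)"
    by (rule gen_rep[OF s(1) refl _ _ s(2) refl]) simp_all
  also have "\<dots> = om n (pt n)" using ev_rep[OF s(1) refl] ev_rep[OF s(2) refl] by (simp add: repc_pt)
  finally show "zv n w (rep n w) \<noteq> 0" using om_pt_nz by simp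
next
  fix i j assume i: "i \<in> Bw n m" and j: "j \<in> Bw n m" and ij: "i \<noteq> j" and nz: "zv n j (rep n i) \<noteq> 0"
  define w1 where "w1 = fst (sp n j)"
  define w2 where "w2 = snd (sp n j)"
  have jeq: "j = w1 @ [0, n] @ w2" using sp_eq j by (simp add: Bw_def w1_def w2_def)
  have s: "set w1 \<subseteq> {..n}" "set w2 \<subseteq> {..n}" using j jeq by (auto simp: Bw_def Wd_def)
  have iW: "i \<in> Wd n (length w1 + length w2 + 2)" using i j jeq by (simp add: Bw_def Wd_def)
  obtain a b where ab: "i = w1 @ [a, b] @ w2" "a \<le> n" "b \<le> n" "om n (repc n a @ repc n b) \<noteq> 0"
    using gen_rep_nz[OF s iW] nz by (auto simp: zv_def w1_def w2_def)
  have "cnt (repc n a @ repc n b) = n" using D2_weight[OF om_D2 ab(4)] by blast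
  then have abn: "a + b = n" by simp
  have "a \<noteq> 0"
  proof
    assume "a = 0"
    then have "i = j" using abn ab(1) jeq by simp
    then show False using ij by simp
  qed
  have "keyv (n + 1) [0, n] < keyv (n + 1) [a, b]"
  proof -
    have p: "0 < a * n" by (rule mult_pos_pos) (use \<open>a \<noteq> 0\<close> n in auto)
    have e: "a * (n + 1) + b = a * n + n" using abn by (simp add: algebra_simps)
    have "n < a * (n + 1) + b" unfolding e using p by linarith
    then show ?thesis by simp
  qed
  then show "keyv (n + 1) j < keyv (n + 1) i"
    unfolding jeq ab(1) keyv_append by simp
qed

lemma zv_G:
  assumes "w \<in> Bw n m" shows "zv n w \<in> G n m"
proof -
  define w1 where "w1 = fst (sp n w)"
  define w2 where "w2 = snd (sp n w)"
  have weq: "w = w1 @ [0, n] @ w2" using sp_eq assms by (simp add: Bw_def w1_def w2_def)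
  have "(w1, w2) \<in> IX n m" using assms weq by (auto simp: Bw_def Wd_def IX_def)
  then show ?thesis unfolding zv_def G_def w1_def[symmetric] w2_def[symmetric] by force
qed

lemma card_AB: "card (Aw n m) + card (Bw n m) = (n + 1) ^ m"
proof -
  have "Aw n m \<union> Bw n m = Wd n m" "Aw n m \<inter> Bw n m = {}" by (auto simp: Aw_def Bw_def)
  then show ?thesis using card_Un_disjoint[of "Aw n m" "Bw n m"] card_Wd[of n m]
    by (simp add: Aw_def Bw_def)
qed

lemma upper_bound:
  assumes n: "n \<ge> 1"
  shows "V.dim (Espace n m) \<le> card (Aw n m)"
proof -
  have "V.dim (Espace n m) + card (zv n ` Bw n m) \<le> card (ev n ` Wd n m)"
    unfolding Espace_char
  proof (rule ub_general[OF _ ev_tens_Wd G_in_span])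
    show "finite (ev n ` Wd n m)" by simp
    show "zv n ` Bw n m \<subseteq> V.span (G n m)" using zv_G by (auto intro: V.span_base)
    show "V.independent (zv n ` Bw n m)" using zv_indep[OF n] by blast
  qed
  moreover have "card (zv n ` Bw n m) = card (Bw n m)" using zv_indep[OF n] by (simp add: card_image)
  ultimately show ?thesis using card_ev[of n m] card_AB[of n m] by simp
qed



section \<open>Counting\<close>

lemma hasp_Nil[simp]: "\<not> hasp n []" by (simp add: hasp_def)

lemma hasp_Cons: "hasp n (c # w) \<longleftrightarrow> (c = 0 \<and> w \<noteq> [] \<and> hd w = n) \<or> hasp n w"
proof
  assume "hasp n (c # w)"
  then obtain w1 w2 where e: "c # w = w1 @ [0, n] @ w2" by (auto simp: hasp_def)
  show "(c = 0 \<and> w \<noteq> [] \<and> hd w = n) \<or> hasp n w"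
  proof (cases w1)
    case Nil then show ?thesis using e by simp
  next
    case (Cons c' w1')
    then have "w = w1' @ [0, n] @ w2" using e by simp
    then show ?thesis by (auto simp: hasp_def)
  qed
next
  assume "(c = 0 \<and> w \<noteq> [] \<and> hd w = n) \<or> hasp n w"
  then show "hasp n (c # w)"
  proof
    assume a: "c = 0 \<and> w \<noteq> [] \<and> hd w = n"
    then have "c # w = [] @ [0, n] @ tl w" by (cases w) auto
    then show ?thesis unfolding hasp_def by blast
  next
    assume "hasp n w"
    then obtain w1 w2 where "w = w1 @ [0, n] @ w2" by (auto simp: hasp_def)
    then have "c # w = (c # w1) @ [0, n] @ w2" by simp
    then show ?thesis unfolding hasp_def by blast
  qed
qed

lemma Aw_0: "Aw n 0 = {[]}" by (auto simp: Aw_def Wd_def)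

lemma Aw_1: "Aw n (Suc 0) = Wd n (Suc 0)"
  by (auto simp: Aw_def Wd_def length_Suc_conv hasp_Cons)

lemma card_Aw_SS:
  assumes n: "n \<ge> 1"
  shows "card (Aw n (Suc (Suc m))) + card (Aw n m) = (n + 1) * card (Aw n (Suc m))"
proof -
  define X where "X = (\<lambda>(c, w). c # w) ` ({..n} \<times> Aw n (Suc m))"
  define Y where "Y = (\<lambda>w. 0 # n # w) ` Aw n m"
  have finA: "finite (Aw n k)" for k by (simp add: Aw_def)
  have cX: "card X = (n + 1) * card (Aw n (Suc m))"
    unfolding X_def by (subst card_image) (auto simp: inj_on_def card_cartesian_product)
  have cY: "card Y = card (Aw n m)"
    unfolding Y_def by (subst card_image) (auto simp: inj_on_def)
  have YX: "Y \<subseteq> X"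
  proof
    fix x assume "x \<in> Y"
    then obtain w where w: "w \<in> Aw n m" "x = 0 # n # w" by (auto simp: Y_def)
    have "n # w \<in> Aw n (Suc m)" using w n by (auto simp: Aw_def Wd_def hasp_Cons)
    then show "x \<in> X" unfolding X_def using w by force
  qed
  have eq: "Aw n (Suc (Suc m)) = X - Y"
  proof
    show "Aw n (Suc (Suc m)) \<subseteq> X - Y"
    proof
      fix x assume x: "x \<in> Aw n (Suc (Suc m))"
      then obtain c w where cw: "x = c # w" by (cases x) (auto simp: Aw_def Wd_def)
      have c: "c \<le> n" and w: "w \<in> Wd n (Suc m)" using x cw by (auto simp: Aw_def Wd_def)
      have nh: "\<not> hasp n w" "\<not> (c = 0 \<and> w \<noteq> [] \<and> hd w = n)" using x cw by (auto simp: Aw_def hasp_Cons)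
      have "x \<in> X" unfolding X_def using c w nh cw by (force simp: Aw_def)
      moreover have "x \<notin> Y" using nh cw by (auto simp: Y_def)
      ultimately show "x \<in> X - Y" by simp
    qed
    show "X - Y \<subseteq> Aw n (Suc (Suc m))"
    proof
      fix x assume x: "x \<in> X - Y"
      then obtain c w where cw: "x = c # w" "c \<le> n" "w \<in> Aw n (Suc m)" by (auto simp: X_def)
      have "\<not> (c = 0 \<and> w \<noteq> [] \<and> hd w = n)"
      proof
        assume a: "c = 0 \<and> w \<noteq> [] \<and> hd w = n"
        then obtain w'' where w'': "w = n # w''" by (cases w) auto
        have "w'' \<in> Aw n m" using cw(3) w'' by (auto simp: Aw_def Wd_def hasp_Cons)
        then have "x \<in> Y" using cw a w'' by (auto simp: Y_def)
        then show False using x by simp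
      qed
      then show "x \<in> Aw n (Suc (Suc m))" using cw by (auto simp: Aw_def Wd_def hasp_Cons)
    qed
  qed
  have "card (Aw n (Suc (Suc m))) = card X - card Y"
    unfolding eq using YX finA by (simp add: card_Diff_subset Y_def)
  moreover have "card Y \<le> card X" by (rule card_mono[OF _ YX]) (simp add: X_def finA)
  ultimately show ?thesis using cX cY by simp
qed

lemma dseq_card:
  assumes n: "n \<ge> 1"
  shows "dseq n m = int (card (Aw n m))"
proof (induction m rule: less_induct)
  case (less m)
  show ?case
  proof (cases m)
    case 0 then show ?thesis by (simp add: Aw_0)
  next
    case (Suc m')
    show ?thesis
    proof (cases m')
      case 0 then show ?thesis using Suc by (simp add: Aw_1 card_Wd)
    next
      case (Suc k)
      have "dseq n m = (int n + 1) * dseq n (Suc k) - dseq n k" using \<open>m = Suc m'\<close> Suc by simp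
      also have "\<dots> = (int n + 1) * int (card (Aw n (Suc k))) - int (card (Aw n k))"
        using less.IH \<open>m = Suc m'\<close> Suc by simp
      also have "\<dots> = int (card (Aw n (Suc (Suc k))))"
        using card_Aw_SS[OF n, of k] by (simp add: algebra_simps flip: of_nat_add of_nat_mult)
      finally show ?thesis using \<open>m = Suc m'\<close> Suc by simp
    qed
  qed
qed



lemma tens_indep:
  assumes B: "finite B" "V.independent B" "B \<subseteq> tens N"
  shows "V.independent ((\<lambda>(b, a). tp N b (sv n a)) ` (B \<times> {..n})) \<and>
         card ((\<lambda>(b, a). tp N b (sv n a)) ` (B \<times> {..n})) = card B * (n + 1)"
proof -
  define \<phi> where "\<phi> = (\<lambda>(b, a). tp N b (sv n a))"
  have ev: "\<phi> (b, a) (u @ repc n a') = b u * (if a = a' then 1 else 0)" if "length u = N" "a' \<le> n" for b a u a'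
    using that by (simp add: \<phi>_def tp_apply sv_repc)
  have bT: "\<And>b u. b \<in> B \<Longrightarrow> length u \<noteq> N \<Longrightarrow> b u = 0" using B(3) by (auto simp: tens_def)
  have inj: "inj_on \<phi> (B \<times> {..n})"
  proof (rule inj_onI, clarify)
    fix b a b' a' assume b: "b \<in> B" "a \<le> n" "b' \<in> B" "a' \<le> n" and e: "\<phi> (b, a) = \<phi> (b', a')"
    have "b \<noteq> 0" using b(1) B(2) V.dependent_zero by blast
    then obtain u where u: "b u \<noteq> 0" by (auto simp: fun_eq_iff)
    then have lu: "length u = N" using bT b(1) by blast
    have "b u * 1 = b' u * (if a' = a then 1 else 0)"
      using ev[OF lu b(2), of b a] ev[OF lu b(2), of b' a'] e by simp
    then have aa: "a' = a" using u by (auto split: if_splits)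
    have "b = b'"
    proof
      fix v
      show "b v = b' v"
      proof (cases "length v = N")
        case True
        then show ?thesis using ev[OF True b(2), of b a] ev[OF True b(2), of b' a'] e aa by simp
      next
        case False
        then show ?thesis using bT[OF b(1) False] bT[OF b(3) False] by simp
      qed
    qed
    then show "b = b' \<and> a = a'" using aa by simp
  qed
  have ind: "V.independent (\<phi> ` (B \<times> {..n}))"
  proof (rule V.independent_if_scalars_zero)
    show "finite (\<phi> ` (B \<times> {..n}))" using B(1) by simp
    fix f x assume s: "(\<Sum>x\<in>\<phi> ` (B \<times> {..n}). cscale (f x) x) = 0" and x: "x \<in> \<phi> ` (B \<times> {..n})"
    then obtain b0 a0 where x0: "x = \<phi> (b0, a0)" "b0 \<in> B" "a0 \<le> n" by auto
    have s2: "(\<Sum>p\<in>B \<times> {..n}. cscale (f (\<phi> p)) (\<phi> p)) = 0"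
      using s unfolding sum.reindex[OF inj] by (simp add: comp_def)
    have "(\<Sum>b\<in>B. cscale (f (\<phi> (b, a0))) b) = 0"
    proof
      fix u
      show "(\<Sum>b\<in>B. cscale (f (\<phi> (b, a0))) b) u = 0 u"
      proof (cases "length u = N")
        case True
        have "0 = (\<Sum>p\<in>B \<times> {..n}. cscale (f (\<phi> p)) (\<phi> p)) (u @ repc n a0)" using s2 by simp
        also have "\<dots> = (\<Sum>p\<in>B \<times> {..n}. f (\<phi> p) * (fst p u * (if snd p = a0 then 1 else 0)))"
          unfolding fun_sum_apply
          by (intro sum.cong refl) (clarsimp simp: cscale_apply ev[OF True x0(3)])
        also have "\<dots> = (\<Sum>b\<in>B. \<Sum>a\<le>n. f (\<phi> (b, a)) * (b u * (if a = a0 then 1 else 0)))"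
          by (subst sum.cartesian_product) (simp add: case_prod_beta)
        also have "\<dots> = (\<Sum>b\<in>B. f (\<phi> (b, a0)) * b u)"
          using x0(3) by (intro sum.cong refl) (simp add: if_distrib[of "\<lambda>z. _ * z"] sum.delta' cong: if_cong)
        also have "\<dots> = (\<Sum>b\<in>B. cscale (f (\<phi> (b, a0))) b) u" by (simp add: fun_sum_apply cscale_apply)
        finally show ?thesis by simp
      next
        case False
        have "(\<Sum>b\<in>B. f (\<phi> (b, a0)) * b u) = 0"
          by (rule sum.neutral) (use bT[OF _ False] in simp)
        then show ?thesis by (simp add: fun_sum_apply cscale_apply)
      qed
    qed
    moreover have h: "\<And>S u. S \<subseteq> B \<Longrightarrow> finite S \<Longrightarrow> (\<Sum>v\<in>S. cscale (u v) v) = 0 \<Longrightarrow> \<forall>v\<in>S. u v = 0"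
      using B(2) unfolding V.independent_explicit_finite_subsets by blast
    ultimately have "\<forall>v\<in>B. f (\<phi> (v, a0)) = 0"
      using h[of B "\<lambda>b. f (\<phi> (b, a0))"] B(1) by simp
    then have "f (\<phi> (b0, a0)) = 0" using x0(2) by blast
    then show "f x = 0" using x0 by simp
  qed
  have "card (\<phi> ` (B \<times> {..n})) = card B * (n + 1)"
    using inj by (simp add: card_image card_cartesian_product)
  then show ?thesis using ind unfolding \<phi>_def by simp
qed



lemma subspace_orth1: "V.subspace {h. cinner N f h = 0}"
  unfolding V.subspace_def by (simp add: cinner_add_right cinner_scale_right)

lemma Espace_sub: "Espace n m \<subseteq> V.span (ev n ` Wd n m)"
  unfolding Espace_char by auto

lemma lower_bound:
  assumes n: "n \<ge> 1"
  shows "(n + 1) * V.dim (Espace n (Suc m)) \<le> V.dim (Espace n (Suc (Suc m))) + V.dim (Espace n m)"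
proof -
  define N0 where "N0 = n * m"
  define N1 where "N1 = n * Suc m"
  define N2 where "N2 = n * Suc (Suc m)"
  have N: "N1 = N0 + n" "N2 = N1 + n" by (simp_all add: N0_def N1_def N2_def)
  define E0 where "E0 = Espace n m"
  define E1 where "E1 = Espace n (Suc m)"
  define E2 where "E2 = Espace n (Suc (Suc m))"
  have E0c: "E0 = {f \<in> V.span (ev n ` Wd n m). \<forall>g\<in>G n m. cinner N0 f g = 0}"
    unfolding E0_def N0_def by (rule Espace_char)
  have E1c: "E1 = {f \<in> V.span (ev n ` Wd n (Suc m)). \<forall>g\<in>G n (Suc m). cinner N1 f g = 0}"
    unfolding E1_def N1_def by (rule Espace_char)
  have E2c: "E2 = {f \<in> V.span (ev n ` Wd n (Suc (Suc m))). \<forall>g\<in>G n (Suc (Suc m)). cinner N2 f g = 0}"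
    unfolding E2_def N2_def by (rule Espace_char)
  obtain B1 where B1: "B1 \<subseteq> E1" "V.independent B1" "E1 \<subseteq> V.span B1" "card B1 = V.dim E1" "finite B1"
    using basis_fin[of E1 "ev n ` Wd n (Suc m)"] Espace_sub unfolding E1_def by auto
  obtain C where C: "C \<subseteq> E0" "V.independent C" "E0 \<subseteq> V.span C" "card C = V.dim E0" "finite C"
    using basis_fin[of E0 "ev n ` Wd n m"] Espace_sub unfolding E0_def by auto
  have "V.span (ev n ` Wd n (Suc m)) \<subseteq> tens N1" unfolding N1_def by (rule span_tens[OF ev_tens_Wd])
  then have B1T: "B1 \<subseteq> tens N1" using B1(1) Espace_sub[of n "Suc m"] unfolding E1_def by blast
  define GV where "GV = (\<lambda>(b, a). tp N1 b (sv n a)) ` (B1 \<times> {..n})"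
  have TI: "V.independent GV" "card GV = card B1 * (n + 1)"
    using tens_indep[OF B1(5) B1(2) B1T, of n] unfolding GV_def by auto
  define VV where "VV = V.span GV"
  have dimVV: "V.dim VV = card B1 * (n + 1)"
    unfolding VV_def using TI V.dim_span_eq_card_independent by metis
  define Y where "Y = (\<lambda>c. tp N0 c (om n)) ` C"
  have cY: "card Y \<le> card C" unfolding Y_def by (rule card_image_le[OF C(5)])
  have W2: "finite (ev n ` Wd n (Suc (Suc m)))" by simp
  have VVsp: "VV \<subseteq> V.span (ev n ` Wd n (Suc (Suc m)))"
    unfolding VV_def
  proof (rule V.span_minimal[OF _ V.subspace_span])
    show "GV \<subseteq> V.span (ev n ` Wd n (Suc (Suc m)))"
    proof
      fix x assume "x \<in> GV"
      then obtain b a where x: "x = tp N1 b (sv n a)" "b \<in> B1" "a \<le> n" by (auto simp: GV_def)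
      have "b \<in> V.span (ev n ` Wd n (Suc m))" using x(2) B1(1) E1c by auto
      then show "x \<in> V.span (ev n ` Wd n (Suc (Suc m)))" unfolding x(1)
      proof (rule span_lin[OF lin_tp_left _ _ V.subspace_span])
        fix s assume "s \<in> ev n ` Wd n (Suc m)"
        then obtain w where w: "s = ev n w" "w \<in> Wd n (Suc m)" by auto
        have "tp N1 s (sv n a) = ev n (w @ [a])" using w ev_snoc[of n w a] by (simp add: N1_def Wd_def)
        moreover have "w @ [a] \<in> Wd n (Suc (Suc m))" using w x(3) by (auto simp: Wd_def)
        ultimately show "tp N1 s (sv n a) \<in> V.span (ev n ` Wd n (Suc (Suc m)))"
          by (auto intro: V.span_base)
      qed
    qed
  qed
  have K: "cinner N2 f (tp N1 g' (sv n b)) = 0" if f: "f \<in> VV" and g': "g' \<in> G n (Suc m)" for f g' b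
  proof (rule orth_span_left[of GV])
    show "f \<in> V.span GV" using f by (simp add: VV_def)
    fix x assume "x \<in> GV"
    then obtain b1 a where x: "x = tp N1 b1 (sv n a)" "b1 \<in> B1" "a \<le> n" by (auto simp: GV_def)
    have "cinner N1 b1 g' = 0" using x(2) B1(1) E1c g' by auto
    then show "cinner N2 x (tp N1 g' (sv n b)) = 0" unfolding x(1) N(2) cinner_tp by simp
  qed
  have incl: "{f \<in> VV. \<forall>y\<in>Y. cinner N2 f y = 0} \<subseteq> E2"
  proof
    fix f assume fa: "f \<in> {f \<in> VV. \<forall>y\<in>Y. cinner N2 f y = 0}"
    then have f: "f \<in> VV" and fY: "\<And>y. y \<in> Y \<Longrightarrow> cinner N2 f y = 0" by auto
    have T: "V.subspace {h. cinner N2 f h = 0}" by (rule subspace_orth1)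
    have "cinner N2 f g = 0" if g: "g \<in> G n (Suc (Suc m))" for g
    proof -
      obtain w1 w2 where gw: "g = gen n w1 w2" "(w1, w2) \<in> IX n (Suc (Suc m))"
        using g by (auto simp: G_def)
      show ?thesis
      proof (cases w2 rule: rev_exhaust)
        case Nil
        then have lw1: "length w1 = m" and sw1: "set w1 \<subseteq> {..n}" using gw(2) by (auto simp: IX_def)
        have om2: "tp (2 * n) (om n) unitv = om n" using om_tens by (simp add: tp_unit_right mult_2)
        have g': "g = tp N0 (ev n w1) (om n)" using gw(1) Nil lw1 om2 by (simp add: gen_def N0_def)
        have "V.span (ev n ` Wd n m) \<subseteq> tens N0" unfolding N0_def by (rule span_tens[OF ev_tens_Wd])
        then have GmT: "G n m \<subseteq> tens N0" using G_in_span by blast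
        have evT: "ev n w1 \<in> tens N0" using ev_tens[of n w1] lw1 by (simp add: N0_def)
        obtain s where s: "s \<in> V.span (G n m)" "\<forall>y\<in>G n m. cinner N0 (ev n w1 - s) y = 0"
          using proj_exists[OF finite_G GmT evT] by blast
        define p where "p = ev n w1 - s"
        have sP: "s \<in> V.span (ev n ` Wd n m)" using s(1) G_in_span V.span_minimal[OF G_in_span V.subspace_span] by blast
        have eP: "ev n w1 \<in> V.span (ev n ` Wd n m)" using lw1 sw1 by (intro V.span_base) (auto simp: Wd_def)
        have "p \<in> E0" unfolding E0c p_def using s(2) sP eP by (auto intro: V.span_diff)
        then have pC: "p \<in> V.span C" using C(3) by auto
        have t1: "tp N0 p (om n) \<in> {h. cinner N2 f h = 0}"
        proof (rule span_lin[OF lin_tp_left pC _ T])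
          fix c assume "c \<in> C" then have "tp N0 c (om n) \<in> Y" by (simp add: Y_def)
          then show "tp N0 c (om n) \<in> {h. cinner N2 f h = 0}" using fY by simp
        qed
        have t2: "tp N0 s (om n) \<in> {h. cinner N2 f h = 0}"
        proof (rule span_lin[OF lin_tp_left s(1) _ T])
          fix g'' assume "g'' \<in> G n m"
          then obtain u1 u2 where gu: "g'' = gen n u1 u2" "(u1, u2) \<in> IX n m" by (auto simp: G_def)
          have lu: "n * (length u1 + length u2 + 2) = N0" using gu(2) by (simp add: IX_def N0_def)
          show "tp N0 g'' (om n) \<in> {h. cinner N2 f h = 0}"
          proof (rule span_lin[OF lin_tp_right om_span _ T])
            fix x assume "x \<in> {tp n (sv n a) (sv n b) | a b. a \<le> n \<and> b \<le> n}"
            then obtain a b where x: "x = tp n (sv n a) (sv n b)" "a \<le> n" "b \<le> n" by auto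
            have "tp N0 g'' x = tp N1 (tp N0 g'' (sv n a)) (sv n b)" unfolding x(1) N(1) by (rule tp_assoc)
            also have "tp N0 g'' (sv n a) = gen n u1 (u2 @ [a])" unfolding gu(1) lu[symmetric] by (rule gen_snoc)
            finally have e: "tp N0 g'' x = tp N1 (gen n u1 (u2 @ [a])) (sv n b)" .
            have "gen n u1 (u2 @ [a]) \<in> G n (Suc m)" using gu(2) x(2) unfolding G_def IX_def by force
            then show "tp N0 g'' x \<in> {h. cinner N2 f h = 0}" unfolding e using K[OF f] by simp
          qed
        qed
        have "g = tp N0 p (om n) + tp N0 s (om n)"
          unfolding g' p_def by (simp add: tp_def fun_eq_iff algebra_simps)
        then show ?thesis using t1 t2 by (simp add: cinner_add_right)
      next
        case (snoc w2' a')
        have a': "a' \<le> n" and ix: "(w1, w2') \<in> IX n (Suc m)" using gw(2) snoc by (auto simp: IX_def)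
        have lN: "n * (length w1 + length w2' + 2) = N1" using ix by (simp add: IX_def N1_def)
        have "g = tp N1 (gen n w1 w2') (sv n a')" unfolding gw(1) snoc lN[symmetric] by (rule gen_snoc[symmetric])
        moreover have "gen n w1 w2' \<in> G n (Suc m)" using ix by (force simp: G_def)
        ultimately show ?thesis using K[OF f] by simp
      qed
    qed
    then show "f \<in> E2" unfolding E2c using f VVsp by auto
  qed
  have "V.dim VV \<le> V.dim {f \<in> VV. \<forall>y\<in>Y. cinner N2 f y = 0} + card Y"
    by (rule dim_constraints[OF _ _ VVsp W2]) (auto simp: Y_def C(5) VV_def intro: V.subspace_span)
  also have "V.dim {f \<in> VV. \<forall>y\<in>Y. cinner N2 f y = 0} \<le> V.dim E2"
    using incl Espace_sub unfolding E2_def by (rule dim_mono_fin) simp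
  finally have "V.dim VV \<le> V.dim E2 + card C" using cY by linarith
  then show ?thesis using dimVV B1(4) C(4) by (simp add: E0_def E1_def E2_def mult.commute)
qed

theorem main_dim:
  assumes n: "n \<ge> 1"
  shows "V.dim (Espace n m) = card (Aw n m)"
proof (induction m rule: less_induct)
  case (less m)
  show ?case
  proof (cases "m < 2")
    case True
    then have "Espace n m = V.span (ev n ` Wd n m)" unfolding Espace_char using G_small by auto
    then have "V.dim (Espace n m) = (n + 1) ^ m" using dim_P by simp
    moreover have "card (Aw n m) = (n + 1) ^ m"
      using True by (cases m) (auto simp: Aw_0 Aw_1 card_Wd)
    ultimately show ?thesis by simp
  next
    case False
    then obtain k where k: "m = Suc (Suc k)" by (metis add_2_eq_Suc less_iff_Suc_add not_less_eq)
    have IH1: "V.dim (Espace n (Suc k)) = card (Aw n (Suc k))" using less k by simp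
    have IH0: "V.dim (Espace n k) = card (Aw n k)" using less k by simp
    have "(n + 1) * card (Aw n (Suc k)) \<le> V.dim (Espace n m) + card (Aw n k)"
      using lower_bound[OF n, of k] IH1 IH0 k by simp
    then have "card (Aw n m) \<le> V.dim (Espace n m)" using card_Aw_SS[OF n, of k] k by simp
    moreover have "V.dim (Espace n m) \<le> card (Aw n m)" by (rule upper_bound[OF n])
    ultimately show ?thesis by simp
  qed
qed

theorem lemma3p8:
  fixes n m :: nat
  assumes "n \<ge> 1"
  shows "int (cdim (Espace n m)) = dseq n m"
  using main_dim[OF assms] dseq_card[OF assms] by simp


end
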